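(* Assume (A1) and (A3). Let $\alpha<1$, let $\Theta=(\theta_1,\dots,\theta_J)\in\mathsf T^J$ be fixed and let $\kappa\le 0$. Then for every $\boldsymbol\lambda\in\mathcal S_J$ we have $\Psi_\alpha(\mu_{\boldsymbol\lambda,\Theta})<\infty$, and for every $\eta>0$ the sequence $(\boldsymbol\lambda_n)_{n\ge1}$ defined by an arbitrary $\boldsymbol\lambda_1\in\mathcal S_J$ and $\boldsymbol\lambda_{n+1}=\mathcal I^{\mathrm{mixt}}_\alpha(\boldsymbol\lambda_n)$ is well-defined (all normalising sums lie in $(0,\infty)$). If in addition $\boldsymbol\lambda_1\in\mathcal S_J^+$, $\eta\in(0,1]$, and the measures $K(\theta_1,\cdot),\dots,K(\theta_J,\cdot)$ are linearly independent, then: (i) $(\Psi_\alpha(\mu_{\boldsymbol\lambda_n,\Theta}))_{n\ge1}$ is nonincreasing; (ii) $(\boldsymbol\lambda_n)_{n\ge1}$ converges to some $\boldsymbol\lambda^\star\in\mathcal S_J$ which is a fixed point of $\mathcal I^{\mathrm{mixt}}_\alpha$; (iii) $\Psi_\alpha(\mu_{\boldsymbol\lambda^\star,\Theta})=\inf_{\boldsymbol\lambda'\in\mathcal S_J}\Psi_\alpha(\mu_{\boldsymbol\lambda',\Theta})$.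
   Context: Let $(\mathsf Y,\mathcal Y,\nu)$ be a measure space with $\nu$ $\sigma$-finite, and $(\mathsf T,\mathcal T)$ a measurable space. Let $k:\mathsf T\times\mathsf Y\to[0,\infty)$ be measurable with $\int_{\mathsf Y}k(\theta,y)\nu(dy)=1$ for all $\theta$, and $K(\theta,A)=\int_A k(\theta,y)\nu(dy)$. Let $p$ be a measurable positive function on $\mathsf Y$. For a probability measure $\mu$ on $\mathsf T$ write $\mu k(y)=\int_{\mathsf T}\mu(d\theta)k(\theta,y)$. For $\alpha\in\mathbb R$ let $f_0(u)=u-1-\log u$, $f_1(u)=1-u+u\log u$, and $f_\alpha(u)=\frac{1}{\alpha(\alpha-1)}[u^\alpha-1-\alpha(u-1)]$ for $\alpha\notin\{0,1\}$ ($u>0$); so $f_\alpha'(u)=\frac{u^{\alpha-1}-1}{\alpha-1}$ for $\alpha\neq1$. Define $\Psi_\alpha(\mu)=\int_{\mathsf Y}f_\alpha\big(\mu k(y)/p(y)\big)p(y)\nu(dy)$ and $b_{\mu,\alpha}(\theta)=\int_{\mathsf Y}k(\theta,y)f_\alpha'\big(\mu k(y)/p(y)\big)\nu(dy)$. Assumption (A1): $k(\theta,y)>0$ and $p(y)>0$ for all $(\theta,y)$, and $\int_{\mathsf Y}p\,d\nu<\infty$. Mixture setting: $\mathcal S_J=\{\boldsymbol\lambda\in\mathbb R^J:\lambda_j\ge0,\sum_j\lambda_j=1\}$, $\mathcal S_J^+=\{\boldsymbol\lambda\in\mathcal S_J:\lambda_j>0\ \forall j\}$, and for $\Theta=(\theta_1,\dots,\theta_J)\in\mathsf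 T^J$, $\mu_{\boldsymbol\lambda,\Theta}=\sum_{j=1}^J\lambda_j\delta_{\theta_j}$. Given $\eta>0$ and $\kappa$ with $(\alpha-1)\kappa\ge0$, let $\Gamma_\alpha(v)=[(\alpha-1)v+1]^{\eta/(1-\alpha)}$ and $\mathcal I^{\mathrm{mixt}}_\alpha(\boldsymbol\lambda)=\Big(\frac{\lambda_j\Gamma_\alpha(b_{\mu_{\boldsymbol\lambda,\Theta},\alpha}(\theta_j)+\kappa)}{\sum_{\ell=1}^J\lambda_\ell\Gamma_\alpha(b_{\mu_{\boldsymbol\lambda,\Theta},\alpha}(\theta_\ell)+\kappa)}\Big)_{1\le j\le J}$ (the Power Descent update on the mixture weights). Assumption (A3): (i) for all $y$, $\theta\mapsto k(\theta,y)$ is continuous (with $\mathsf T$ a metric space with Borel $\sigma$-field); (ii) $\int_{\mathsf Y}\max_{1\le j\le J}k(\theta_j,y)\cdot\max_{1\le j'\le J}\big(k(\theta_{j'},y)/p(y)\big)^{\alpha-1}\nu(dy)<\infty$; if $\alpha=0$, additionally $\int_{\mathsf Y}\max_{1\le j\le J}|\log(k(\theta_j,y)/p(y))|\,p(y)\nu(dy)<\infty$. *)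

theory Defs
  imports "HOL-Analysis.Analysis"
begin

definition falpha :: "real \<Rightarrow> real \<Rightarrow> real" where
  "falpha \<alpha> u =
     (if \<alpha> = 0 then u - 1 - ln u
      else if \<alpha> = 1 then 1 - u + u * ln u
      else (u powr \<alpha> - 1 - \<alpha> * (u - 1)) / (\<alpha> * (\<alpha> - 1)))"

definition falpha' :: "real \<Rightarrow> real \<Rightarrow> real" where
  "falpha' \<alpha> u = (if \<alpha> = 1 then ln u else (u powr (\<alpha> - 1) - 1) / (\<alpha> - 1))"

definition simplexJ :: "(real ^ 'j) set" where
  "simplexJ = {l. (\<forall>j. 0 \<le> l $ j) \<and> (\<Sum>j\<in>UNIV. l $ j) = 1}"

definition simplexJ_pos :: "(real ^ 'j) set" where
  "simplexJ_pos = {l. (\<forall>j. 0 < l $ j) \<and> (\<Sum>j\<in>UNIV. l $ j) = 1}"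

definition mixk :: "('a \<Rightarrow> 'y \<Rightarrow> real) \<Rightarrow> ('j::finite \<Rightarrow> 'a) \<Rightarrow> real ^ 'j \<Rightarrow> 'y \<Rightarrow> real" where
  "mixk k \<Theta> l y = (\<Sum>j\<in>UNIV. l $ j * k (\<Theta> j) y)"

text \<open>Psi_alpha(mu) = int f_alpha(mu k / p) p d nu, given the density mk = mu k.\<close>
definition Psi :: "'y measure \<Rightarrow> ('y \<Rightarrow> real) \<Rightarrow> real \<Rightarrow> ('y \<Rightarrow> real) \<Rightarrow> ennreal" where
  "Psi \<nu> p \<alpha> mk = (\<integral>\<^sup>+ y. ennreal (falpha \<alpha> (mk y / p y) * p y) \<partial>\<nu>)"

definition bfun :: "'y measure \<Rightarrow> ('a \<Rightarrow> 'y \<Rightarrow> real) \<Rightarrow> ('y \<Rightarrow> real) \<Rightarrow> real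
                    \<Rightarrow> ('y \<Rightarrow> real) \<Rightarrow> 'a \<Rightarrow> real" where
  "bfun \<nu> k p \<alpha> mk \<theta> = (\<integral> y. k \<theta> y * falpha' \<alpha> (mk y / p y) \<partial>\<nu>)"

definition Gamma_a :: "real \<Rightarrow> real \<Rightarrow> real \<Rightarrow> real" where
  "Gamma_a \<alpha> \<eta> v = ((\<alpha> - 1) * v + 1) powr (\<eta> / (1 - \<alpha>))"

definition Imixt :: "'y measure \<Rightarrow> ('a \<Rightarrow> 'y \<Rightarrow> real) \<Rightarrow> ('y \<Rightarrow> real) \<Rightarrow> real \<Rightarrow> real \<Rightarrow> real
                     \<Rightarrow> ('j::finite \<Rightarrow> 'a) \<Rightarrow> real ^ 'j \<Rightarrow> real ^ 'j" where
  "Imixt \<nu> k p \<alpha> \<eta> \<kappa> \<Theta> l =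
     (\<chi> j. l $ j * Gamma_a \<alpha> \<eta> (bfun \<nu> k p \<alpha> (mixk k \<Theta> l) (\<Theta> j) + \<kappa>) /
           (\<Sum>m\<in>UNIV. l $ m * Gamma_a \<alpha> \<eta> (bfun \<nu> k p \<alpha> (mixk k \<Theta> l) (\<Theta> m) + \<kappa>)))"

definition Kmeas :: "'y measure \<Rightarrow> ('a \<Rightarrow> 'y \<Rightarrow> real) \<Rightarrow> 'a \<Rightarrow> 'y set \<Rightarrow> real" where
  "Kmeas \<nu> k \<theta> A = measure (density \<nu> (\<lambda>y. ennreal (k \<theta> y))) A"

definition kernels_lin_indep :: "'y measure \<Rightarrow> ('a \<Rightarrow> 'y \<Rightarrow> real) \<Rightarrow> ('j::finite \<Rightarrow> 'a) \<Rightarrow> bool" where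
  "kernels_lin_indep \<nu> k \<Theta> \<longleftrightarrow>
     (\<forall>c :: 'j \<Rightarrow> real. (\<forall>A \<in> sets \<nu>. (\<Sum>j\<in>UNIV. c j * Kmeas \<nu> k (\<Theta> j) A) = 0) \<longrightarrow> (\<forall>j. c j = 0))"

end

theory Submission
  imports Defs
begin

lemma ln_strict: assumes "(x::real) > 0" "x \<noteq> 1" shows "ln x < x - 1"
proof -
  have s: "sqrt x > 0" "sqrt x \<noteq> 1" using assms by auto
  have "ln x = 2 * ln (sqrt x)" using assms by (simp add: ln_sqrt)
  also have "\<dots> \<le> 2 * (sqrt x - 1)" using ln_le_minus_one[OF s(1)] by simp
  also have "\<dots> < x - 1"
  proof -
    have "(sqrt x - 1)^2 > 0" using s by simp
    hence "(sqrt x)^2 - 2 * sqrt x + 1 > 0" by (simp add: power2_eq_square algebra_simps)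
    thus ?thesis using assms by simp
  qed
  finally show ?thesis .
qed

lemma bern_strict:
  fixes r x :: real
  assumes x: "x > 0" "x \<noteq> 1" and r: "r \<noteq> 0" "r \<noteq> 1"
  shows "0 < (x powr r - 1 - r * (x - 1)) / (r * (r - 1))"
proof -
  define g where "g = (\<lambda>t::real. (t powr r - 1 - r * (t - 1)) / (r * (r - 1)))"
  have rr: "r * (r - 1) \<noteq> 0" using r by auto
  have der: "(g has_real_derivative (t powr (r-1) - 1) / (r - 1)) (at t)" if "t > 0" for t
  proof -
    have "(g has_real_derivative (r * t powr (r - 1) - r) / (r * (r - 1))) (at t)"
      unfolding g_def using that r
      by (auto intro!: derivative_eq_intros)
    moreover have "(r * t powr (r - 1) - r) / (r * (r - 1)) = (t powr (r-1) - 1) / (r - 1)"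
      using r by (simp add: field_simps)
    ultimately show ?thesis by simp
  qed
  have g1: "g 1 = 0" by (simp add: g_def)
  show ?thesis
  proof (cases "x > 1")
    case True
    have "g 1 < g x"
    proof (rule DERIV_pos_imp_increasing_open[OF True])
      fix t assume t: "1 < t" "t < x"
      have "0 < (t powr (r-1) - 1) / (r - 1)"
      proof (cases "r > 1")
        case True thus ?thesis using t by (simp add: divide_pos_pos)
      next
        case False
        hence "r - 1 < 0" using r by simp
        hence "t powr (r-1) < 1" using powr_less_one t by auto
        thus ?thesis using \<open>r - 1 < 0\<close> by (simp add: divide_neg_neg)
      qed
      moreover have "t > 0" using t by simp
      ultimately show "\<exists>y. (g has_real_derivative y) (at t) \<and> 0 < y" using der by blast
    next
      show "continuous_on {1..x} g"
        using der by (intro DERIV_continuous_on[of _ _ "\<lambda>t. (t powr (r-1) - 1) / (r - 1)"]) (auto intro: has_field_derivative_at_within)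
    qed
    thus ?thesis using g1 by (simp add: g_def)
  next
    case False
    hence xl: "x < 1" using x by simp
    have "g x > g 1"
    proof (rule DERIV_neg_imp_decreasing_open[OF xl])
      fix t assume t: "x < t" "t < 1"
      have t0: "t > 0" using t x by simp
      have "(t powr (r-1) - 1) / (r - 1) < 0"
      proof (cases "r > 1")
        case True
        have "t powr (r-1) < 1 powr (r-1)" using t t0 True by (intro powr_less_mono2) auto
        thus ?thesis using True by (simp add: divide_neg_pos)
      next
        case False
        hence "r - 1 < 0" using r by simp
        have "1 powr (r-1) < t powr (r-1)" using t t0 \<open>r - 1 < 0\<close> by (intro powr_less_mono2_neg) auto
        thus ?thesis using \<open>r - 1 < 0\<close> by (simp add: divide_pos_neg)
      qed
      thus "\<exists>y. (g has_real_derivative y) (at t) \<and> y < 0" using der t0 by blast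
    next
      show "continuous_on {x..1} g"
        using der x by (intro DERIV_continuous_on[of _ _ "\<lambda>t. (t powr (r-1) - 1) / (r - 1)"]) (auto intro: has_field_derivative_at_within)
    qed
    thus ?thesis using g1 by (simp add: g_def)
  qed
qed

lemma bern_nonneg:
  fixes r x :: real
  assumes x: "x > 0" and r: "r \<noteq> 0" "r \<noteq> 1"
  shows "0 \<le> (x powr r - 1 - r * (x - 1)) / (r * (r - 1))"
  using bern_strict[OF x _ r] x by (cases "x = 1") (auto simp: less_imp_le)


lemma jensen_pow:
  fixes w y :: "'i \<Rightarrow> real" and S :: "'i set" and r :: real
  assumes S: "finite S" and w: "\<And>j. j \<in> S \<Longrightarrow> 0 \<le> w j" and ws: "(\<Sum>j\<in>S. w j) = 1"
    and y: "\<And>j. j \<in> S \<Longrightarrow> 0 < y j" and r: "r \<noteq> 0" "r \<noteq> 1"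
  defines "a \<equiv> (\<Sum>j\<in>S. w j * y j)"
  shows "0 \<le> ((\<Sum>j\<in>S. w j * y j powr r) - a powr r) / (r * (r - 1))"
    and "(\<exists>j\<in>S. 0 < w j \<and> y j \<noteq> a) \<Longrightarrow> 0 < ((\<Sum>j\<in>S. w j * y j powr r) - a powr r) / (r * (r - 1))"
proof -
  have "\<exists>j\<in>S. 0 < w j" using ws w by (metis less_eq_real_def sum.neutral zero_neq_one)
  then obtain j0 where j0: "j0 \<in> S" "0 < w j0" by blast
  have a0: "0 < a" unfolding a_def
    using j0 w y by (intro sum_pos2[OF S j0(1)]) (auto intro: mult_nonneg_nonneg less_imp_le)
  define T where "T j = w j * (((y j / a) powr r - 1 - r * (y j / a - 1)) / (r * (r - 1)))" for j
  have Tnn: "0 \<le> T j" if "j \<in> S" for j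
    unfolding T_def by (rule mult_nonneg_nonneg[OF w[OF that] bern_nonneg[of "y j / a" r]]) (use y[OF that] a0 r in auto)
  have sumT: "(\<Sum>j\<in>S. T j) = ((\<Sum>j\<in>S. w j * y j powr r) - a powr r) / (r * (r - 1)) / a powr r"
  proof -
    have "(\<Sum>j\<in>S. T j) = ((\<Sum>j\<in>S. w j * (y j / a) powr r) - (\<Sum>j\<in>S. w j) - r * ((\<Sum>j\<in>S. w j * y j) / a - (\<Sum>j\<in>S. w j))) / (r * (r - 1))"
    proof -
      have rr: "r * (r - 1) \<noteq> 0" using r by simp
      have "(\<Sum>j\<in>S. T j) = (\<Sum>j\<in>S. (w j * (y j / a) powr r - w j - r * (w j * y j / a - w j))) / (r * (r - 1))"
        unfolding T_def sum_divide_distrib by (intro sum.cong refl) (simp add: algebra_simps)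
      also have "\<dots> = ((\<Sum>j\<in>S. w j * (y j / a) powr r) - (\<Sum>j\<in>S. w j) - r * ((\<Sum>j\<in>S. w j * y j) / a - (\<Sum>j\<in>S. w j))) / (r * (r - 1))"
        by (simp add: sum_subtractf sum_distrib_left[symmetric] sum_divide_distrib[symmetric])
      finally show ?thesis .
    qed
    also have "\<dots> = ((\<Sum>j\<in>S. w j * (y j / a) powr r) - 1) / (r * (r - 1))"
      using ws a0 by (simp add: a_def[symmetric])
    also have "(\<Sum>j\<in>S. w j * (y j / a) powr r) = (\<Sum>j\<in>S. w j * y j powr r) / a powr r"
      using a0 y by (simp add: powr_divide sum_divide_distrib less_imp_le)
    finally show ?thesis using a0 by (simp add: field_simps)
  qed
  have apos: "0 < a powr r" using a0 by simp
  have sumT': "((\<Sum>j\<in>S. w j * y j powr r) - a powr r) / (r * (r - 1)) = (\<Sum>j\<in>S. T j) * a powr r"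
    using sumT apos by simp
  show "0 \<le> ((\<Sum>j\<in>S. w j * y j powr r) - a powr r) / (r * (r - 1))"
  proof -
    have "0 \<le> (\<Sum>j\<in>S. T j)" using Tnn by (simp add: sum_nonneg)
    thus ?thesis unfolding sumT' using apos by simp
  qed
  assume "\<exists>j\<in>S. 0 < w j \<and> y j \<noteq> a"
  then obtain j1 where j1: "j1 \<in> S" "0 < w j1" "y j1 \<noteq> a" by blast
  have "0 < T j1"
    unfolding T_def by (rule mult_pos_pos[OF j1(2) bern_strict[of "y j1 / a" r]]) (use j1 y[OF j1(1)] a0 r in auto)
  hence "0 < (\<Sum>j\<in>S. T j)" using Tnn j1 S by (intro sum_pos2[OF S j1(1)]) auto
  thus "0 < ((\<Sum>j\<in>S. w j * y j powr r) - a powr r) / (r * (r - 1))" unfolding sumT' using apos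
    by simp
qed

lemma jensen_ln:
  fixes w y :: "'i \<Rightarrow> real" and S :: "'i set"
  assumes S: "finite S" and w: "\<And>j. j \<in> S \<Longrightarrow> 0 \<le> w j" and ws: "(\<Sum>j\<in>S. w j) = 1"
    and y: "\<And>j. j \<in> S \<Longrightarrow> 0 < y j"
  shows "(\<Sum>j\<in>S. w j * ln (y j)) \<le> ln (\<Sum>j\<in>S. w j * y j)"
proof -
  define a where "a = (\<Sum>j\<in>S. w j * y j)"
  have "\<exists>j\<in>S. 0 < w j" using ws w by (metis less_eq_real_def sum.neutral zero_neq_one)
  then obtain j0 where j0: "j0 \<in> S" "0 < w j0" by blast
  have a0: "0 < a" unfolding a_def
    using j0 w y by (intro sum_pos2[OF S j0(1)]) (auto intro: mult_nonneg_nonneg less_imp_le)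
  have "(\<Sum>j\<in>S. w j * ln (y j / a)) \<le> (\<Sum>j\<in>S. w j * (y j / a - 1))"
    using w y a0 ln_le_minus_one by (intro sum_mono mult_left_mono) auto
  also have "\<dots> = 0" using ws a0 by (simp add: algebra_simps sum_subtractf sum_divide_distrib[symmetric] a_def[symmetric]  sum_distrib_left)
  finally have "(\<Sum>j\<in>S. w j * ln (y j / a)) \<le> 0" .
  moreover have "(\<Sum>j\<in>S. w j * ln (y j / a)) = (\<Sum>j\<in>S. w j * ln (y j) - w j * ln a)"
  proof (rule sum.cong[OF refl])
    fix j assume "j \<in> S" hence "y j > 0" by (rule y)
    thus "w j * ln (y j / a) = w j * ln (y j) - w j * ln a" using a0 by (simp add: ln_div right_diff_distrib)
  qed
  moreover have "(\<Sum>j\<in>S. w j * ln (y j) - w j * ln a) = (\<Sum>j\<in>S. w j * ln (y j)) - ln a"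
    using ws by (simp add: sum_subtractf sum_distrib_right[symmetric])
  ultimately show ?thesis by (simp add: a_def)
qed

lemma jensen_xlnx:
  fixes w y :: "'i \<Rightarrow> real" and S :: "'i set"
  assumes S: "finite S" and w: "\<And>j. j \<in> S \<Longrightarrow> 0 \<le> w j" and ws: "(\<Sum>j\<in>S. w j) = 1"
    and y: "\<And>j. j \<in> S \<Longrightarrow> 0 < y j"
  defines "a \<equiv> (\<Sum>j\<in>S. w j * y j)"
  shows "a * ln a \<le> (\<Sum>j\<in>S. w j * (y j * ln (y j)))"
    and "(\<exists>j\<in>S. 0 < w j \<and> y j \<noteq> a) \<Longrightarrow> a * ln a < (\<Sum>j\<in>S. w j * (y j * ln (y j)))"
proof -
  have "\<exists>j\<in>S. 0 < w j" using ws w by (metis less_eq_real_def sum.neutral zero_neq_one)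
  then obtain j0 where j0: "j0 \<in> S" "0 < w j0" by blast
  have a0: "0 < a" unfolding a_def
    using j0 w y by (intro sum_pos2[OF S j0(1)]) (auto intro: mult_nonneg_nonneg less_imp_le)
  define T where "T j = w j * (y j * ln (y j) - y j * ln a - y j + a)" for j
  have pt: "0 \<le> y j * ln (y j) - y j * ln a - y j + a" if "j \<in> S" for j
  proof -
    have "ln (a / y j) \<le> a / y j - 1" using a0 y[OF that] by (intro ln_le_minus_one) simp
    hence "y j * ln (a / y j) \<le> y j * (a / y j - 1)" using y[OF that] by (intro mult_left_mono) auto
    thus ?thesis using a0 y[OF that] by (simp add: ln_div algebra_simps)
  qed
  have ptS: "0 < y j * ln (y j) - y j * ln a - y j + a" if "j \<in> S" "y j \<noteq> a" for j
  proof -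
    have "ln (a / y j) < a / y j - 1" using a0 y[OF that(1)] that(2) by (intro ln_strict) auto
    hence "y j * ln (a / y j) < y j * (a / y j - 1)" using y[OF that(1)] by (intro mult_strict_left_mono) auto
    thus ?thesis using a0 y[OF that(1)] by (simp add: ln_div algebra_simps)
  qed
  have sumT: "(\<Sum>j\<in>S. T j) = (\<Sum>j\<in>S. w j * (y j * ln (y j))) - a * ln a"
  proof -
    have "(\<Sum>j\<in>S. T j) = (\<Sum>j\<in>S. w j * (y j * ln (y j))) - (\<Sum>j\<in>S. w j * y j) * ln a - (\<Sum>j\<in>S. w j * y j) + (\<Sum>j\<in>S. w j) * a"
      unfolding T_def by (simp add: algebra_simps sum.distrib sum_subtractf sum_distrib_right sum_distrib_left)
    thus ?thesis using ws by (simp add: a_def)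
  qed
  show "a * ln a \<le> (\<Sum>j\<in>S. w j * (y j * ln (y j)))"
  proof -
    have "0 \<le> (\<Sum>j\<in>S. T j)" unfolding T_def using w pt by (intro sum_nonneg mult_nonneg_nonneg) auto
    thus ?thesis using sumT by simp
  qed
  assume "\<exists>j\<in>S. 0 < w j \<and> y j \<noteq> a"
  then obtain j1 where j1: "j1 \<in> S" "0 < w j1" "y j1 \<noteq> a" by blast
  have "0 < (\<Sum>j\<in>S. T j)"
    unfolding T_def using w pt j1 ptS[OF j1(1) j1(3)]
    by (intro sum_pos2[OF S j1(1)]) (auto intro: mult_nonneg_nonneg)
  thus "a * ln a < (\<Sum>j\<in>S. w j * (y j * ln (y j)))" using sumT by simp
qed


lemma const_on_supp_sum:
  fixes l B :: "'i \<Rightarrow> real"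
  assumes "\<And>j. j \<in> S \<Longrightarrow> 0 < l j \<Longrightarrow> B j = b" "(\<Sum>j\<in>S. l j) = 1" "\<And>j. j \<in> S \<Longrightarrow> 0 \<le> l j"
  shows "(\<Sum>j\<in>S. l j * g (B j)) = g b"
proof -
  have "(\<Sum>j\<in>S. l j * g (B j)) = (\<Sum>j\<in>S. l j * g b)"
  proof (rule sum.cong[OF refl])
    fix j assume j: "j \<in> S"
    show "l j * g (B j) = l j * g b" using assms(1)[OF j] assms(3)[OF j] by (cases "l j = 0") auto
  qed
  also have "\<dots> = g b" using assms(2) by (simp add: sum_distrib_right[symmetric])
  finally show ?thesis .
qed

lemma jensen_concave:
  fixes w y :: "'i \<Rightarrow> real" and S :: "'i set" and r :: real
  assumes S: "finite S" and w: "\<And>j. j \<in> S \<Longrightarrow> 0 \<le> w j" and ws: "(\<Sum>j\<in>S. w j) = 1"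
    and y: "\<And>j. j \<in> S \<Longrightarrow> 0 < y j" and r: "0 < r" "r < 1"
  shows "(\<Sum>j\<in>S. w j * y j powr r) \<le> (\<Sum>j\<in>S. w j * y j) powr r"
    and "(\<exists>j\<in>S. 0 < w j \<and> y j \<noteq> (\<Sum>j\<in>S. w j * y j)) \<Longrightarrow> (\<Sum>j\<in>S. w j * y j powr r) < (\<Sum>j\<in>S. w j * y j) powr r"
proof -
  have neg: "r * (r - 1) < 0" using r by (simp add: mult_pos_neg)
  show "(\<Sum>j\<in>S. w j * y j powr r) \<le> (\<Sum>j\<in>S. w j * y j) powr r"
    using jensen_pow(1)[OF S w ws y, where r=r] r neg by (simp add: zero_le_divide_iff)
  assume "\<exists>j\<in>S. 0 < w j \<and> y j \<noteq> (\<Sum>j\<in>S. w j * y j)"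
  thus "(\<Sum>j\<in>S. w j * y j powr r) < (\<Sum>j\<in>S. w j * y j) powr r"
    using jensen_pow(2)[OF S w ws y, where r=r] r neg by (simp add: zero_less_divide_iff)
qed

lemma jensen_convex:
  fixes w y :: "'i \<Rightarrow> real" and S :: "'i set" and r :: real
  assumes S: "finite S" and w: "\<And>j. j \<in> S \<Longrightarrow> 0 \<le> w j" and ws: "(\<Sum>j\<in>S. w j) = 1"
    and y: "\<And>j. j \<in> S \<Longrightarrow> 0 < y j" and r: "r < 0 \<or> 1 < r"
  shows "(\<Sum>j\<in>S. w j * y j) powr r \<le> (\<Sum>j\<in>S. w j * y j powr r)"
    and "(\<exists>j\<in>S. 0 < w j \<and> y j \<noteq> (\<Sum>j\<in>S. w j * y j)) \<Longrightarrow> (\<Sum>j\<in>S. w j * y j) powr r < (\<Sum>j\<in>S. w j * y j powr r)"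
proof -
  have pos: "r * (r - 1) > 0" using r by (auto simp: mult_pos_pos mult_neg_neg)
  have r01: "r \<noteq> 0" "r \<noteq> 1" using r by auto
  show "(\<Sum>j\<in>S. w j * y j) powr r \<le> (\<Sum>j\<in>S. w j * y j powr r)"
    using jensen_pow(1)[OF S w ws y r01] pos by (simp add: zero_le_divide_iff)
  assume "\<exists>j\<in>S. 0 < w j \<and> y j \<noteq> (\<Sum>j\<in>S. w j * y j)"
  thus "(\<Sum>j\<in>S. w j * y j) powr r < (\<Sum>j\<in>S. w j * y j powr r)"
    using jensen_pow(2)[OF S w ws y r01] pos by (simp add: zero_less_divide_iff)
qed

lemma jensen_convex_ge1:
  fixes w y :: "'i \<Rightarrow> real" and S :: "'i set" and r :: real
  assumes S: "finite S" and w: "\<And>j. j \<in> S \<Longrightarrow> 0 \<le> w j" and ws: "(\<Sum>j\<in>S. w j) = 1"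
    and y: "\<And>j. j \<in> S \<Longrightarrow> 0 < y j" and r: "1 \<le> r"
  shows "(\<Sum>j\<in>S. w j * y j) powr r \<le> (\<Sum>j\<in>S. w j * y j powr r)"
proof (cases "r = 1")
  case True thus ?thesis using w y by (simp add: sum_nonneg less_imp_le)
next
  case False thus ?thesis using jensen_convex(1)[OF S w ws y] r by simp
qed

lemma jensen_concave_le1:
  fixes w y :: "'i \<Rightarrow> real" and S :: "'i set" and r :: real
  assumes S: "finite S" and w: "\<And>j. j \<in> S \<Longrightarrow> 0 \<le> w j" and ws: "(\<Sum>j\<in>S. w j) = 1"
    and y: "\<And>j. j \<in> S \<Longrightarrow> 0 < y j" and r: "0 < r" "r \<le> 1"
  shows "(\<Sum>j\<in>S. w j * y j powr r) \<le> (\<Sum>j\<in>S. w j * y j) powr r"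
proof (cases "r = 1")
  case True thus ?thesis using w y by (simp add: sum_nonneg less_imp_le)
next
  case False thus ?thesis using jensen_concave(1)[OF S w ws y] r by simp
qed

lemma wsum_pos:
  fixes w y :: "'i \<Rightarrow> real"
  assumes S: "finite S" and w: "\<And>j. j \<in> S \<Longrightarrow> 0 \<le> w j" and ws: "(\<Sum>j\<in>S. w j) = 1"
    and y: "\<And>j. j \<in> S \<Longrightarrow> 0 < y j"
  shows "0 < (\<Sum>j\<in>S. w j * y j)"
proof -
  have "\<exists>j\<in>S. 0 < w j" using ws w by (metis less_eq_real_def sum.neutral zero_neq_one)
  then obtain j0 where j0: "j0 \<in> S" "0 < w j0" by blast
  show ?thesis
    using j0 w y by (intro sum_pos2[OF S j0(1)]) (auto intro: mult_nonneg_nonneg less_imp_le)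
qed


lemma fin_neg:
  fixes l A :: "'i \<Rightarrow> real" and S :: "'i set"
  assumes S: "finite S" and l: "\<And>j. j \<in> S \<Longrightarrow> 0 \<le> l j" and ls: "(\<Sum>j\<in>S. l j) = 1"
    and A: "\<And>j. j \<in> S \<Longrightarrow> 0 < A j" and c: "0 \<le> c" and al: "\<alpha> < 0" and eta: "0 < \<eta>" "\<eta> \<le> 1"
  defines "\<rho> \<equiv> \<eta> / (1 - \<alpha>)"
  defines "Z \<equiv> (\<Sum>j\<in>S. l j * (A j + c) powr \<rho>)"
  shows "(\<Sum>j\<in>S. l j * A j * ((A j + c) powr \<rho> / Z) powr \<alpha>) \<le> (\<Sum>j\<in>S. l j * A j)"
    and "\<not> (\<forall>j\<in>S. 0 < l j \<longrightarrow> (A j + c) powr \<rho> = Z) \<Longrightarrow>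
         (\<Sum>j\<in>S. l j * A j * ((A j + c) powr \<rho> / Z) powr \<alpha>) < (\<Sum>j\<in>S. l j * A j)"
proof -
  define B where "B j = A j + c" for j
  have B: "\<And>j. j \<in> S \<Longrightarrow> 0 < B j" using A c by (simp add: B_def add_pos_nonneg)
  define Sm where "Sm = (\<Sum>j\<in>S. l j * B j)"
  have Sm0: "0 < Sm" unfolding Sm_def by (rule wsum_pos[OF S l ls B])
  have SmA: "Sm = (\<Sum>j\<in>S. l j * A j) + c" unfolding Sm_def B_def using ls
    by (simp add: algebra_simps sum.distrib sum_distrib_left[symmetric])
  have rho0: "0 < \<rho>" unfolding \<rho>_def using eta al by simp
  have rho1: "\<rho> < 1" unfolding \<rho>_def using eta al by (simp add: divide_less_eq)
  define q where "q = \<rho> * \<alpha>"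
  define t where "t = 1 + q"
  have t0: "0 < t"
  proof -
    have "\<rho> \<le> 1 / (1 - \<alpha>)" unfolding \<rho>_def using eta al by (intro divide_right_mono) auto
    hence "(1 / (1 - \<alpha>)) * \<alpha> \<le> \<rho> * \<alpha>" using al by (intro mult_right_mono_neg) auto
    moreover have "1 + (1 / (1 - \<alpha>)) * \<alpha> = 1 / (1 - \<alpha>)" using al by (simp add: field_simps)
    moreover have "0 < 1 / (1 - \<alpha>)" using al by simp
    ultimately show ?thesis unfolding t_def q_def by linarith
  qed
  have t1: "t < 1" unfolding t_def q_def using rho0 al by (simp add: mult_pos_neg)
  have Z0: "0 < Z" unfolding Z_def B_def[symmetric]
  proof (rule wsum_pos[OF S l ls])
    fix j assume "j \<in> S" thus "0 < B j powr \<rho>" using B[OF \<open>j \<in> S\<close>] by simp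
  qed
  have Zeq: "Z = (\<Sum>j\<in>S. l j * B j powr \<rho>)" unfolding Z_def B_def ..
  have tm: "l j * A j * ((A j + c) powr \<rho> / Z) powr \<alpha> = Z powr (-\<alpha>) * (l j * B j powr t - c * (l j * B j powr q))"
    if "j \<in> S" for j
  proof -
    have Bj: "0 < B j" using B that .
    have "((A j + c) powr \<rho> / Z) powr \<alpha> = (B j powr \<rho>) powr \<alpha> / Z powr \<alpha>"
      unfolding B_def by (rule powr_divide)
    also have "\<dots> = B j powr q * Z powr (-\<alpha>)" by (simp add: powr_powr q_def powr_minus_divide)
    finally have e1: "((A j + c) powr \<rho> / Z) powr \<alpha> = B j powr q * Z powr (-\<alpha>)" .
    have e3: "B j * B j powr q = B j powr t" using Bj by (simp add: t_def powr_add)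
    have "l j * A j * ((A j + c) powr \<rho> / Z) powr \<alpha> = l j * (B j - c) * (B j powr q * Z powr (-\<alpha>))"
      unfolding e1 by (simp add: B_def)
    also have "\<dots> = Z powr (-\<alpha>) * (l j * (B j * B j powr q) - c * (l j * B j powr q))" by (simp add: algebra_simps)
    also have "\<dots> = Z powr (-\<alpha>) * (l j * B j powr t - c * (l j * B j powr q))" unfolding e3 ..
    finally show ?thesis .
  qed
  have LHS: "(\<Sum>j\<in>S. l j * A j * ((A j + c) powr \<rho> / Z) powr \<alpha>)
      = Z powr (-\<alpha>) * ((\<Sum>j\<in>S. l j * B j powr t) - c * (\<Sum>j\<in>S. l j * B j powr q))"
    by (simp add: tm sum_distrib_left[symmetric] sum_subtractf)
  have i: "(\<Sum>j\<in>S. l j * B j powr t) \<le> Sm powr t"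
    unfolding Sm_def using jensen_concave(1)[OF S l ls B t0 t1] .
  have ii: "Z \<le> Sm powr \<rho>" unfolding Zeq Sm_def using jensen_concave(1)[OF S l ls B rho0 rho1] .
  have iii: "Z powr \<alpha> \<le> (\<Sum>j\<in>S. l j * B j powr q)"
  proof -
    have "(\<Sum>j\<in>S. l j * B j powr \<rho>) powr \<alpha> \<le> (\<Sum>j\<in>S. l j * (B j powr \<rho>) powr \<alpha>)"
      using B by (intro jensen_convex(1)[OF S l ls]) (auto simp: al less_imp_neq[symmetric])
    thus ?thesis unfolding Zeq by (simp add: powr_powr q_def)
  qed
  have Zma: "Z powr (-\<alpha>) \<le> Sm powr (\<rho> * (-\<alpha>))"
  proof -
    have "Z powr (-\<alpha>) \<le> (Sm powr \<rho>) powr (-\<alpha>)" using ii Z0 al by (intro powr_mono2) auto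
    thus ?thesis by (simp add: powr_powr)
  qed
  have P1: "Z powr (-\<alpha>) * (\<Sum>j\<in>S. l j * B j powr t) \<le> Sm"
  proof -
    have "Z powr (-\<alpha>) * (\<Sum>j\<in>S. l j * B j powr t) \<le> Sm powr (\<rho> * (-\<alpha>)) * Sm powr t"
      using Zma i Z0 by (intro mult_mono) (auto intro!: sum_nonneg mult_nonneg_nonneg l)
    also have "\<dots> = Sm" using Sm0 by (simp add: powr_add[symmetric] t_def q_def)
    finally show ?thesis .
  qed
  have P2: "c \<le> c * (Z powr (-\<alpha>) * (\<Sum>j\<in>S. l j * B j powr q))"
  proof -
    have "1 = Z powr (-\<alpha>) * Z powr \<alpha>" using Z0 by (simp add: powr_minus)
    also have "\<dots> \<le> Z powr (-\<alpha>) * (\<Sum>j\<in>S. l j * B j powr q)" using iii by (intro mult_left_mono) auto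
    finally have "1 \<le> Z powr (-\<alpha>) * (\<Sum>j\<in>S. l j * B j powr q)" .
    from mult_left_mono[OF this c] show ?thesis by simp
  qed
  show "(\<Sum>j\<in>S. l j * A j * ((A j + c) powr \<rho> / Z) powr \<alpha>) \<le> (\<Sum>j\<in>S. l j * A j)"
    unfolding LHS using P1 P2 SmA by (simp add: algebra_simps)
  assume ne: "\<not> (\<forall>j\<in>S. 0 < l j \<longrightarrow> (A j + c) powr \<rho> = Z)"
  have "\<exists>j\<in>S. 0 < l j \<and> B j \<noteq> Sm"
  proof (rule ccontr)
    assume "\<not> (\<exists>j\<in>S. 0 < l j \<and> B j \<noteq> Sm)"
    hence cs: "\<And>j. j \<in> S \<Longrightarrow> 0 < l j \<Longrightarrow> B j = Sm" by auto
    have "Z = Sm powr \<rho>" unfolding Zeq using const_on_supp_sum[OF cs ls l, where g="\<lambda>x. x powr \<rho>"] by simp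
    thus False using ne cs by (auto simp: B_def)
  qed
  note ex = this
  have i': "(\<Sum>j\<in>S. l j * B j powr t) < Sm powr t"
    unfolding Sm_def by (rule jensen_concave(2)[where w=l and y=B, OF S l ls B t0 t1 ex[unfolded Sm_def]])
  have P1': "Z powr (-\<alpha>) * (\<Sum>j\<in>S. l j * B j powr t) < Sm"
  proof -
    have "Z powr (-\<alpha>) * (\<Sum>j\<in>S. l j * B j powr t) < Z powr (-\<alpha>) * Sm powr t"
      using i' Z0 by simp
    also have "\<dots> \<le> Sm powr (\<rho> * (-\<alpha>)) * Sm powr t" using Zma by (intro mult_right_mono) auto
    also have "\<dots> = Sm" using Sm0 by (simp add: powr_add[symmetric] t_def q_def)
    finally show ?thesis .
  qed
  show "(\<Sum>j\<in>S. l j * A j * ((A j + c) powr \<rho> / Z) powr \<alpha>) < (\<Sum>j\<in>S. l j * A j)"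
    unfolding LHS using P1' P2 SmA by (simp add: algebra_simps)
qed


lemma fin_pos:
  fixes l A :: "'i \<Rightarrow> real" and S :: "'i set"
  assumes S: "finite S" and l: "\<And>j. j \<in> S \<Longrightarrow> 0 \<le> l j" and ls: "(\<Sum>j\<in>S. l j) = 1"
    and A: "\<And>j. j \<in> S \<Longrightarrow> 0 < A j" and c: "0 \<le> c" and al: "0 < \<alpha>" "\<alpha> < 1" and eta: "0 < \<eta>" "\<eta> \<le> 1"
  defines "\<rho> \<equiv> \<eta> / (1 - \<alpha>)"
  defines "Z \<equiv> (\<Sum>j\<in>S. l j * (A j + c) powr \<rho>)"
  shows "(\<Sum>j\<in>S. l j * A j) \<le> (\<Sum>j\<in>S. l j * A j * ((A j + c) powr \<rho> / Z) powr \<alpha>)"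
    and "\<not> (\<forall>j\<in>S. 0 < l j \<longrightarrow> (A j + c) powr \<rho> = Z) \<Longrightarrow>
         (\<Sum>j\<in>S. l j * A j) < (\<Sum>j\<in>S. l j * A j * ((A j + c) powr \<rho> / Z) powr \<alpha>)"
proof -
  define B where "B j = A j + c" for j
  have B: "\<And>j. j \<in> S \<Longrightarrow> 0 < B j" using A c by (simp add: B_def add_pos_nonneg)
  define Sm where "Sm = (\<Sum>j\<in>S. l j * B j)"
  have Sm0: "0 < Sm" unfolding Sm_def by (rule wsum_pos[OF S l ls B])
  have SmA: "Sm = (\<Sum>j\<in>S. l j * A j) + c" unfolding Sm_def B_def using ls
    by (simp add: algebra_simps sum.distrib sum_distrib_left[symmetric])
  have rho0: "0 < \<rho>" unfolding \<rho>_def using eta al by simp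
  define q where "q = \<rho> * \<alpha>"
  define t where "t = 1 + q"
  have q0: "0 < q" unfolding q_def using rho0 al by simp
  have t1: "1 < t" unfolding t_def using q0 by simp
  have Z0: "0 < Z" unfolding Z_def B_def[symmetric]
  proof (rule wsum_pos[OF S l ls])
    fix j assume "j \<in> S" thus "0 < B j powr \<rho>" using B[OF \<open>j \<in> S\<close>] by simp
  qed
  have Zeq: "Z = (\<Sum>j\<in>S. l j * B j powr \<rho>)" unfolding Z_def B_def ..
  have tm: "l j * A j * ((A j + c) powr \<rho> / Z) powr \<alpha> = Z powr (-\<alpha>) * (l j * B j powr t - c * (l j * B j powr q))"
    if "j \<in> S" for j
  proof -
    have Bj: "0 < B j" using B that .
    have "((A j + c) powr \<rho> / Z) powr \<alpha> = (B j powr \<rho>) powr \<alpha> / Z powr \<alpha>"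
      unfolding B_def by (rule powr_divide)
    also have "\<dots> = B j powr q * Z powr (-\<alpha>)" by (simp add: powr_powr q_def powr_minus_divide)
    finally have e1: "((A j + c) powr \<rho> / Z) powr \<alpha> = B j powr q * Z powr (-\<alpha>)" .
    have e3: "B j * B j powr q = B j powr t" using Bj by (simp add: t_def powr_add)
    have "l j * A j * ((A j + c) powr \<rho> / Z) powr \<alpha> = l j * (B j - c) * (B j powr q * Z powr (-\<alpha>))"
      unfolding e1 by (simp add: B_def)
    also have "\<dots> = Z powr (-\<alpha>) * (l j * (B j * B j powr q) - c * (l j * B j powr q))" by (simp add: algebra_simps)
    also have "\<dots> = Z powr (-\<alpha>) * (l j * B j powr t - c * (l j * B j powr q))" unfolding e3 ..
    finally show ?thesis .
  qed
  have LHS: "(\<Sum>j\<in>S. l j * A j * ((A j + c) powr \<rho> / Z) powr \<alpha>)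
      = Z powr (-\<alpha>) * ((\<Sum>j\<in>S. l j * B j powr t) - c * (\<Sum>j\<in>S. l j * B j powr q))"
    by (simp add: tm sum_distrib_left[symmetric] sum_subtractf)
  have iii: "(\<Sum>j\<in>S. l j * B j powr q) \<le> Z powr \<alpha>"
  proof -
    have "(\<Sum>j\<in>S. l j * (B j powr \<rho>) powr \<alpha>) \<le> (\<Sum>j\<in>S. l j * B j powr \<rho>) powr \<alpha>"
      using B al by (intro jensen_concave(1)[OF S l ls]) (auto simp: less_imp_neq[symmetric])
    thus ?thesis unfolding Zeq by (simp add: powr_powr q_def)
  qed
  have P2: "c * (Z powr (-\<alpha>) * (\<Sum>j\<in>S. l j * B j powr q)) \<le> c"
  proof -
    have "Z powr (-\<alpha>) * (\<Sum>j\<in>S. l j * B j powr q) \<le> Z powr (-\<alpha>) * Z powr \<alpha>" using iii by (intro mult_left_mono) auto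
    also have "\<dots> = 1" using Z0 by (simp add: powr_minus)
    finally have "Z powr (-\<alpha>) * (\<Sum>j\<in>S. l j * B j powr q) \<le> 1" .
    from mult_left_mono[OF this c] show ?thesis by simp
  qed
  have nc: "\<exists>j\<in>S. 0 < l j \<and> B j \<noteq> Sm" if ne: "\<not> (\<forall>j\<in>S. 0 < l j \<longrightarrow> (A j + c) powr \<rho> = Z)"
  proof (rule ccontr)
    assume "\<not> (\<exists>j\<in>S. 0 < l j \<and> B j \<noteq> Sm)"
    hence cs: "\<And>j. j \<in> S \<Longrightarrow> 0 < l j \<Longrightarrow> B j = Sm" by auto
    have "Z = Sm powr \<rho>" unfolding Zeq using const_on_supp_sum[OF cs ls l, where g="\<lambda>x. x powr \<rho>"] by simp
    thus False using ne cs by (auto simp: B_def)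
  qed
  have main: "Sm \<le> Z powr (-\<alpha>) * (\<Sum>j\<in>S. l j * B j powr t) \<and>
     (\<not> (\<forall>j\<in>S. 0 < l j \<longrightarrow> (A j + c) powr \<rho> = Z) \<longrightarrow> Sm < Z powr (-\<alpha>) * (\<Sum>j\<in>S. l j * B j powr t))"
  proof (cases "\<rho> \<le> 1")
    case True
    have i: "Sm powr t \<le> (\<Sum>j\<in>S. l j * B j powr t)"
      unfolding Sm_def using jensen_convex(1)[where w=l and y=B and r=t, OF S l ls B] t1 by auto
    have ii: "Z \<le> Sm powr \<rho>" unfolding Zeq Sm_def using jensen_concave_le1[OF S l ls B rho0 True] .
    have Zma: "Sm powr (- q) \<le> Z powr (-\<alpha>)"
    proof -
      have "(Sm powr \<rho>) powr (-\<alpha>) \<le> Z powr (-\<alpha>)" using ii Z0 al by (intro powr_mono2') auto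
      thus ?thesis by (simp add: powr_powr q_def)
    qed
    have eqS: "Sm powr (- q) * Sm powr t = Sm" using Sm0 by (simp add: powr_add[symmetric] t_def)
    have "Sm \<le> Z powr (-\<alpha>) * (\<Sum>j\<in>S. l j * B j powr t)"
    proof -
      have "Sm = Sm powr (- q) * Sm powr t" using eqS by simp
      also have "\<dots> \<le> Z powr (-\<alpha>) * (\<Sum>j\<in>S. l j * B j powr t)"
        using Zma i Sm0 by (intro mult_mono) auto
      finally show ?thesis .
    qed
    moreover have "Sm < Z powr (-\<alpha>) * (\<Sum>j\<in>S. l j * B j powr t)"
      if ne: "\<not> (\<forall>j\<in>S. 0 < l j \<longrightarrow> (A j + c) powr \<rho> = Z)"
    proof -
      have i': "Sm powr t < (\<Sum>j\<in>S. l j * B j powr t)"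
        unfolding Sm_def by (rule jensen_convex(2)[where w=l and y=B, OF S l ls B _ nc[OF ne, unfolded Sm_def]]) (use t1 in auto)
      have "Sm = Sm powr (- q) * Sm powr t" using eqS by simp
      also have "\<dots> < Sm powr (- q) * (\<Sum>j\<in>S. l j * B j powr t)" using i' Sm0 by simp
      also have "\<dots> \<le> Z powr (-\<alpha>) * (\<Sum>j\<in>S. l j * B j powr t)"
        using Zma i Sm0 by (intro mult_right_mono) (auto intro: order_trans[OF _ i])
      finally show ?thesis .
    qed
    ultimately show ?thesis by blast
  next
    case False
    hence rho1: "1 < \<rho>" by simp
    define y where "y j = B j powr \<rho>" for j
    have y: "\<And>j. j \<in> S \<Longrightarrow> 0 < y j" unfolding y_def using B by (simp add: less_imp_neq[symmetric])
    have Zy: "Z = (\<Sum>j\<in>S. l j * y j)" unfolding Zeq y_def ..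
    have ge1: "1 \<le> t / \<rho>"
    proof -
      have "\<rho> * (1 - \<alpha>) = \<eta>" unfolding \<rho>_def using al by simp
      hence "\<rho> \<le> t" unfolding t_def q_def using eta by (simp add: algebra_simps)
      thus ?thesis using rho0 by simp
    qed
    have i: "Z powr (t / \<rho>) \<le> (\<Sum>j\<in>S. l j * B j powr t)"
    proof -
      have "Z powr (t / \<rho>) \<le> (\<Sum>j\<in>S. l j * y j powr (t / \<rho>))"
        unfolding Zy by (rule jensen_convex_ge1[OF S l ls y ge1])
      also have "\<dots> = (\<Sum>j\<in>S. l j * B j powr t)" unfolding y_def using rho0 by (simp add: powr_powr)
      finally show ?thesis .
    qed
    have r0: "0 < 1 / \<rho>" "1 / \<rho> < 1" using rho1 by auto
    have Sy: "Sm = (\<Sum>j\<in>S. l j * y j powr (1 / \<rho>))" unfolding Sm_def y_def using rho0 B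
      by (intro sum.cong refl) (simp add: powr_powr less_imp_le)
    have ii: "Sm \<le> Z powr (1 / \<rho>)" unfolding Sy Zy by (rule jensen_concave(1)[OF S l ls y r0])
    have eqZ: "Z powr (-\<alpha>) * Z powr (t / \<rho>) = Z powr (1 / \<rho>)"
      using Z0 rho0 by (simp add: powr_add[symmetric] t_def q_def add_divide_distrib)
    have k: "Z powr (1 / \<rho>) \<le> Z powr (-\<alpha>) * (\<Sum>j\<in>S. l j * B j powr t)"
      unfolding eqZ[symmetric] using i by (intro mult_left_mono) auto
    have "Sm \<le> Z powr (-\<alpha>) * (\<Sum>j\<in>S. l j * B j powr t)" using ii k by linarith
    moreover have "Sm < Z powr (-\<alpha>) * (\<Sum>j\<in>S. l j * B j powr t)"
      if ne: "\<not> (\<forall>j\<in>S. 0 < l j \<longrightarrow> (A j + c) powr \<rho> = Z)"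
    proof -
      have ex: "\<exists>j\<in>S. 0 < l j \<and> y j \<noteq> (\<Sum>j\<in>S. l j * y j)" using ne unfolding Zy y_def B_def by auto
      have "Sm < Z powr (1 / \<rho>)" unfolding Sy Zy by (rule jensen_concave(2)[OF S l ls y r0 ex])
      thus ?thesis using k by linarith
    qed
    ultimately show ?thesis by blast
  qed
  show "(\<Sum>j\<in>S. l j * A j) \<le> (\<Sum>j\<in>S. l j * A j * ((A j + c) powr \<rho> / Z) powr \<alpha>)"
    unfolding LHS using main P2 SmA by (simp add: algebra_simps)
  assume ne: "\<not> (\<forall>j\<in>S. 0 < l j \<longrightarrow> (A j + c) powr \<rho> = Z)"
  show "(\<Sum>j\<in>S. l j * A j) < (\<Sum>j\<in>S. l j * A j * ((A j + c) powr \<rho> / Z) powr \<alpha>)"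
    unfolding LHS using main ne P2 SmA by (simp add: algebra_simps)
qed


lemma fin_zero:
  fixes l A :: "'i \<Rightarrow> real" and S :: "'i set"
  assumes S: "finite S" and l: "\<And>j. j \<in> S \<Longrightarrow> 0 \<le> l j" and ls: "(\<Sum>j\<in>S. l j) = 1"
    and A: "\<And>j. j \<in> S \<Longrightarrow> 0 < A j" and c: "0 \<le> c" and eta: "0 < \<eta>" "\<eta> \<le> 1"
  defines "Z \<equiv> (\<Sum>j\<in>S. l j * (A j + c) powr \<eta>)"
  shows "0 \<le> (\<Sum>j\<in>S. l j * A j * ln ((A j + c) powr \<eta> / Z))"
    and "\<not> (\<forall>j\<in>S. 0 < l j \<longrightarrow> (A j + c) powr \<eta> = Z) \<Longrightarrow>
         0 < (\<Sum>j\<in>S. l j * A j * ln ((A j + c) powr \<eta> / Z))"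
proof -
  define B where "B j = A j + c" for j
  have B: "\<And>j. j \<in> S \<Longrightarrow> 0 < B j" using A c by (simp add: B_def add_pos_nonneg)
  define Sm where "Sm = (\<Sum>j\<in>S. l j * B j)"
  have Sm0: "0 < Sm" unfolding Sm_def by (rule wsum_pos[OF S l ls B])
  have Z0: "0 < Z" unfolding Z_def B_def[symmetric]
  proof (rule wsum_pos[OF S l ls])
    fix j assume "j \<in> S" thus "0 < B j powr \<eta>" using B[OF \<open>j \<in> S\<close>] by simp
  qed
  have Zeq: "Z = (\<Sum>j\<in>S. l j * B j powr \<eta>)" unfolding Z_def B_def ..
  have tm: "l j * A j * ln ((A j + c) powr \<eta> / Z) =
      \<eta> * (l j * (B j * ln (B j))) - ln Z * (l j * B j) - c * (\<eta> * (l j * ln (B j)) - ln Z * l j)"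
    if "j \<in> S" for j
  proof -
    have Bj: "0 < B j" using B that .
    have e: "ln ((A j + c) powr \<eta> / Z) = \<eta> * ln (B j) - ln Z"
      using Bj Z0 by (simp add: B_def[symmetric] ln_div ln_powr)
    show ?thesis unfolding e by (simp add: B_def algebra_simps)
  qed
  have LHS: "(\<Sum>j\<in>S. l j * A j * ln ((A j + c) powr \<eta> / Z)) =
     \<eta> * (\<Sum>j\<in>S. l j * (B j * ln (B j))) - ln Z * Sm - c * (\<eta> * (\<Sum>j\<in>S. l j * ln (B j)) - ln Z)"
    using ls by (simp add: tm sum_subtractf sum_distrib_left[symmetric] Sm_def)
  have ii: "ln Z \<le> \<eta> * ln Sm"
  proof -
    have "Z \<le> Sm powr \<eta>" unfolding Zeq Sm_def using jensen_concave_le1[OF S l ls B eta] .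
    hence "ln Z \<le> ln (Sm powr \<eta>)" by (subst ln_le_cancel_iff) (use Z0 Sm0 in auto)
    thus ?thesis using Sm0 by (simp add: ln_powr)
  qed
  have iii: "\<eta> * (\<Sum>j\<in>S. l j * ln (B j)) \<le> ln Z"
  proof -
    have "(\<Sum>j\<in>S. l j * ln (B j powr \<eta>)) \<le> ln (\<Sum>j\<in>S. l j * B j powr \<eta>)"
      using B by (intro jensen_ln[OF S l ls]) (auto simp: less_imp_neq[symmetric])
    moreover have "(\<Sum>j\<in>S. l j * ln (B j powr \<eta>)) = \<eta> * (\<Sum>j\<in>S. l j * ln (B j))"
      unfolding sum_distrib_left using B by (intro sum.cong refl) (simp add: ln_powr less_imp_neq[symmetric])
    ultimately show ?thesis unfolding Zeq by simp
  qed
  have i: "Sm * ln Sm \<le> (\<Sum>j\<in>S. l j * (B j * ln (B j)))" unfolding Sm_def by (rule jensen_xlnx(1)[OF S l ls B])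
  have key: "\<eta> * (Sm * ln Sm) - ln Z * Sm \<ge> 0"
  proof -
    have "ln Z * Sm \<le> \<eta> * ln Sm * Sm" using ii Sm0 by (intro mult_right_mono) auto
    thus ?thesis by (simp add: algebra_simps)
  qed
  have c3: "0 \<le> c * (ln Z - \<eta> * (\<Sum>j\<in>S. l j * ln (B j)))" using c iii by simp
  have ieta: "\<eta> * (Sm * ln Sm) \<le> \<eta> * (\<Sum>j\<in>S. l j * (B j * ln (B j)))" using i eta by simp
  show "0 \<le> (\<Sum>j\<in>S. l j * A j * ln ((A j + c) powr \<eta> / Z))"
    unfolding LHS using key c3 ieta by (simp add: algebra_simps)
  assume ne: "\<not> (\<forall>j\<in>S. 0 < l j \<longrightarrow> (A j + c) powr \<eta> = Z)"
  have nc: "\<exists>j\<in>S. 0 < l j \<and> B j \<noteq> Sm"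
  proof (rule ccontr)
    assume "\<not> (\<exists>j\<in>S. 0 < l j \<and> B j \<noteq> Sm)"
    hence cs: "\<And>j. j \<in> S \<Longrightarrow> 0 < l j \<Longrightarrow> B j = Sm" by auto
    have "Z = Sm powr \<eta>" unfolding Zeq using const_on_supp_sum[OF cs ls l, where g="\<lambda>x. x powr \<eta>"] by simp
    thus False using ne cs by (auto simp: B_def)
  qed
  have "Sm * ln Sm < (\<Sum>j\<in>S. l j * (B j * ln (B j)))" unfolding Sm_def
    by (rule jensen_xlnx(2)[OF S l ls B nc[unfolded Sm_def]])
  hence ieta': "\<eta> * (Sm * ln Sm) < \<eta> * (\<Sum>j\<in>S. l j * (B j * ln (B j)))" using eta by simp
  show "0 < (\<Sum>j\<in>S. l j * A j * ln ((A j + c) powr \<eta> / Z))"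
    unfolding LHS using key c3 ieta' by (simp add: algebra_simps)
qed


locale pd =
  fixes \<nu> :: "'y measure" and k :: "'a::metric_space \<Rightarrow> 'y \<Rightarrow> real" and p :: "'y \<Rightarrow> real"
    and \<Theta> :: "'j::finite \<Rightarrow> 'a" and \<alpha> \<kappa> :: real
  assumes kmeas: "(\<lambda>(\<theta>, y). k \<theta> y) \<in> borel_measurable (borel \<Otimes>\<^sub>M \<nu>)"
    and kpos: "\<And>\<theta> y. y \<in> space \<nu> \<Longrightarrow> 0 < k \<theta> y"
    and kint1: "\<And>\<theta>. (\<integral>\<^sup>+ y. ennreal (k \<theta> y) \<partial>\<nu>) = 1"
    and pmeas: "p \<in> borel_measurable \<nu>"
    and ppos: "\<And>y. y \<in> space \<nu> \<Longrightarrow> 0 < p y"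
    and pint: "(\<integral>\<^sup>+ y. ennreal (p y) \<partial>\<nu>) < \<infinity>"
    and A3int: "(\<integral>\<^sup>+ y. ennreal ((MAX j. k (\<Theta> j) y) *
                    (MAX j'. (k (\<Theta> j') y / p y) powr (\<alpha> - 1))) \<partial>\<nu>) < \<infinity>"
    and A3log: "\<alpha> = 0 \<Longrightarrow>
                 (\<integral>\<^sup>+ y. ennreal ((MAX j. \<bar>ln (k (\<Theta> j) y / p y)\<bar>) * p y) \<partial>\<nu>) < \<infinity>"
    and alt: "\<alpha> < 1"
    and kap: "\<kappa> \<le> 0"
begin

definition kk :: "'j \<Rightarrow> 'y \<Rightarrow> real" where "kk j y = k (\<Theta> j) y"
definition mk :: "real ^ 'j \<Rightarrow> 'y \<Rightarrow> real" where "mk l y = (\<Sum>j\<in>UNIV. l $ j * kk j y)"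
definition u :: "real ^ 'j \<Rightarrow> 'y \<Rightarrow> real" where "u l y = mk l y / p y"
definition Aj :: "real ^ 'j \<Rightarrow> 'j \<Rightarrow> real" where "Aj l j = (\<integral> y. kk j y * u l y powr (\<alpha> - 1) \<partial>\<nu>)"
definition cc :: real where "cc = (\<alpha> - 1) * \<kappa>"
definition Jc :: real where "Jc = real CARD('j)"
definition H :: "'y \<Rightarrow> real" where
  "H y = (MAX j. kk j y) * (MAX j'. (kk j' y / p y) powr (\<alpha> - 1))"

lemma mk_eq: "mixk k \<Theta> l = mk l"
  by (simp add: mixk_def mk_def kk_def fun_eq_iff)

lemma kk_meas[measurable]: "kk j \<in> borel_measurable \<nu>"
proof -
  have "(\<lambda>y. (\<lambda>(\<theta>, y). k \<theta> y) (\<Theta> j, y)) \<in> borel_measurable \<nu>"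
    by (rule measurable_Pair2[OF kmeas]) simp
  thus ?thesis by (simp add: kk_def[abs_def])
qed

lemma p_meas[measurable]: "p \<in> borel_measurable \<nu>" by (rule pmeas)

lemma mk_meas[measurable]: "mk l \<in> borel_measurable \<nu>"
  unfolding mk_def[abs_def] by measurable

lemma u_meas[measurable]: "u l \<in> borel_measurable \<nu>"
  unfolding u_def[abs_def] by measurable

lemma kk_pos: "y \<in> space \<nu> \<Longrightarrow> 0 < kk j y" by (simp add: kk_def kpos)

lemma cc_nonneg: "0 \<le> cc" unfolding cc_def using alt kap by (simp add: mult_nonpos_nonpos)

lemma Jc_pos: "0 < Jc" unfolding Jc_def by simp

lemma simplex_ex_big:
  fixes l :: "real ^ 'j"
  assumes "l \<in> simplexJ"
  shows "\<exists>j0. 1 / Jc \<le> l $ j0"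
proof (rule ccontr)
  assume "\<not> ?thesis"
  hence lt: "\<And>j. l $ j < 1 / Jc" by (simp add: not_le)
  have "(\<Sum>j\<in>UNIV. l $ j) < (\<Sum>j\<in>(UNIV::'j set). 1 / Jc)"
    using sum_strict_mono[of "UNIV::'j set" "\<lambda>j. l $ j" "\<lambda>j. 1 / Jc"] lt by simp
  also have "\<dots> = 1" unfolding Jc_def by simp
  finally show False using assms by (simp add: simplexJ_def)
qed

lemma simplex_nonneg: "(l :: real ^ 'j) \<in> simplexJ \<Longrightarrow> 0 \<le> l $ j" by (simp add: simplexJ_def)
lemma simplex_sum: "(l :: real ^ 'j) \<in> simplexJ \<Longrightarrow> (\<Sum>j\<in>UNIV. l $ j) = 1" by (simp add: simplexJ_def)

lemma mk_ge:
  assumes "l \<in> simplexJ" "y \<in> space \<nu>"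
  shows "l $ j * kk j y \<le> mk l y"
  unfolding mk_def
  by (intro member_le_sum) (use assms in \<open>auto intro!: mult_nonneg_nonneg simplex_nonneg less_imp_le[OF kk_pos]\<close>)

lemma mk_le:
  assumes "l \<in> simplexJ" "y \<in> space \<nu>"
  shows "mk l y \<le> (MAX j. kk j y)"
proof -
  have "mk l y \<le> (\<Sum>j\<in>UNIV. l $ j * (MAX j. kk j y))"
    unfolding mk_def using assms simplex_nonneg by (intro sum_mono mult_left_mono) auto
  also have "\<dots> = (MAX j. kk j y)" using simplex_sum[OF assms(1)] by (simp add: sum_distrib_right[symmetric])
  finally show ?thesis .
qed

lemma mk_pos:
  assumes "l \<in> simplexJ" "y \<in> space \<nu>"
  shows "0 < mk l y"
proof -
  obtain j0 where j0: "1 / Jc \<le> l $ j0" using simplex_ex_big[OF assms(1)] by blast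
  have "0 < l $ j0" using j0 Jc_pos by (smt (verit) divide_pos_pos)
  hence "0 < l $ j0 * kk j0 y" using kk_pos[OF assms(2)] by simp
  thus ?thesis using mk_ge[OF assms] by (meson less_le_trans)
qed

lemma u_pos: "l \<in> simplexJ \<Longrightarrow> y \<in> space \<nu> \<Longrightarrow> 0 < u l y"
  unfolding u_def using mk_pos ppos by simp

lemma u_lower:
  assumes "l \<in> simplexJ" "y \<in> space \<nu>"
  shows "\<exists>j0. (kk j0 y / p y) / Jc \<le> u l y"
proof -
  obtain j0 where j0: "1 / Jc \<le> l $ j0" using simplex_ex_big[OF assms(1)] by blast
  have "kk j0 y / Jc \<le> l $ j0 * kk j0 y"
    using mult_right_mono[OF j0 less_imp_le[OF kk_pos[OF assms(2)]]] by simp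
  also have "\<dots> \<le> mk l y" by (rule mk_ge[OF assms])
  finally have "kk j0 y / Jc / p y \<le> mk l y / p y" by (rule divide_right_mono[OF _ less_imp_le[OF ppos[OF assms(2)]]])
  moreover have "kk j0 y / Jc / p y = (kk j0 y / p y) / Jc" by simp
  ultimately have "(kk j0 y / p y) / Jc \<le> u l y" unfolding u_def by linarith
  thus ?thesis by blast
qed

lemma u_pow_bound:
  assumes "l \<in> simplexJ" "y \<in> space \<nu>"
  shows "u l y powr (\<alpha> - 1) \<le> Jc powr (1 - \<alpha>) * (MAX j'. (kk j' y / p y) powr (\<alpha> - 1))"
proof -
  obtain j0 where j0: "(kk j0 y / p y) / Jc \<le> u l y" using u_lower[OF assms] by blast
  have pos: "0 < (kk j0 y / p y) / Jc" using kk_pos[OF assms(2)] ppos[OF assms(2)] Jc_pos by simp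
  have "u l y powr (\<alpha> - 1) \<le> ((kk j0 y / p y) / Jc) powr (\<alpha> - 1)"
    using j0 pos alt by (intro powr_mono2') auto
  also have "\<dots> = Jc powr (1 - \<alpha>) * (kk j0 y / p y) powr (\<alpha> - 1)"
  proof -
    have "((kk j0 y / p y) / Jc) powr (\<alpha> - 1) = (kk j0 y / p y) powr (\<alpha> - 1) / Jc powr (\<alpha> - 1)"
      by (rule powr_divide)
    also have "\<dots> = (kk j0 y / p y) powr (\<alpha> - 1) * inverse (Jc powr (\<alpha> - 1))" by (simp add: divide_inverse)
    also have "inverse (Jc powr (\<alpha> - 1)) = Jc powr (1 - \<alpha>)"
      using powr_minus[of Jc "\<alpha> - 1"] by simp
    finally show ?thesis by (simp add: mult.commute)
  qed
  also have "\<dots> \<le> Jc powr (1 - \<alpha>) * (MAX j'. (kk j' y / p y) powr (\<alpha> - 1))"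
    by (intro mult_left_mono) (auto intro: Max_ge)
  finally show ?thesis .
qed

end

context pd begin

lemma kk_int: "integrable \<nu> (kk j)"
  by (rule integrableI_nonneg) (auto simp: kk_def kint1 intro!: AE_I2 less_imp_le kpos)

lemma kk_integral: "(\<integral>y. kk j y \<partial>\<nu>) = 1"
proof -
  have "ennreal (\<integral>y. kk j y \<partial>\<nu>) = (\<integral>\<^sup>+ y. ennreal (kk j y) \<partial>\<nu>)"
    by (rule nn_integral_eq_integral[symmetric]) (auto intro!: AE_I2 less_imp_le kk_pos kk_int)
  also have "\<dots> = 1" by (simp add: kk_def kint1)
  finally show ?thesis by (metis ennreal_1 ennreal_inj integral_nonneg_AE kk_pos less_imp_le AE_I2 zero_le_one)
qed

lemma p_int: "integrable \<nu> p"
proof (rule integrableI_nonneg)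
  show "AE x in \<nu>. 0 \<le> p x" by (auto intro!: AE_I2 less_imp_le ppos)
  show "(\<integral>\<^sup>+ x. ennreal (p x) \<partial>\<nu>) < \<infinity>" using pint .
qed simp

lemma H_meas[measurable]: "H \<in> borel_measurable \<nu>"
  unfolding H_def[abs_def] by measurable

lemma H_nonneg: "y \<in> space \<nu> \<Longrightarrow> 0 \<le> H y"
  unfolding H_def by (intro mult_nonneg_nonneg) (auto simp: Max_ge_iff less_imp_le[OF kk_pos])

lemma H_int: "integrable \<nu> H"
proof (rule integrableI_nonneg)
  show "AE x in \<nu>. 0 \<le> H x" by (auto intro!: AE_I2 H_nonneg)
  show "(\<integral>\<^sup>+ x. ennreal (H x) \<partial>\<nu>) < \<infinity>" using A3int by (simp add: H_def kk_def)
qed simp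

lemma integrand_bound:
  assumes "l \<in> simplexJ" "y \<in> space \<nu>"
  shows "\<bar>kk i y * u l y powr (\<alpha> - 1)\<bar> \<le> Jc powr (1 - \<alpha>) * H y"
proof -
  have "\<bar>kk i y * u l y powr (\<alpha> - 1)\<bar> = kk i y * u l y powr (\<alpha> - 1)"
    by (rule abs_of_nonneg[OF mult_nonneg_nonneg[OF less_imp_le[OF kk_pos[OF assms(2)]] powr_ge_zero]])
  also have "\<dots> \<le> (MAX j. kk j y) * (Jc powr (1 - \<alpha>) * (MAX j'. (kk j' y / p y) powr (\<alpha> - 1)))"
    by (intro mult_mono u_pow_bound[OF assms]) (auto intro: Max_ge simp: Max_ge_iff less_imp_le[OF kk_pos[OF assms(2)]])
  also have "\<dots> = Jc powr (1 - \<alpha>) * H y" by (simp add: H_def)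
  finally show ?thesis .
qed

lemma kpow_int:
  assumes "l \<in> simplexJ"
  shows "integrable \<nu> (\<lambda>y. kk i y * u l y powr (\<alpha> - 1))"
proof -
  have f: "integrable \<nu> (\<lambda>y. Jc powr (1 - \<alpha>) * H y)" by (intro integrable_mult_right H_int)
  have "AE y in \<nu>. norm (kk i y * u l y powr (\<alpha> - 1)) \<le> norm (Jc powr (1 - \<alpha>) * H y)"
    using integrand_bound[OF assms] H_nonneg by (auto intro!: AE_I2)
  from Bochner_Integration.integrable_bound[OF f _ this] show ?thesis by simp
qed

lemma Aj_pos:
  assumes "l \<in> simplexJ"
  shows "0 < Aj l j"
proof -
  have nn: "AE y in \<nu>. 0 \<le> kk j y * u l y powr (\<alpha> - 1)"
    by (auto intro!: AE_I2 mult_nonneg_nonneg less_imp_le[OF kk_pos])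
  have "Aj l j \<ge> 0" unfolding Aj_def using nn by (rule integral_nonneg_AE)
  moreover have "Aj l j \<noteq> 0"
  proof
    assume "Aj l j = 0"
    hence "AE y in \<nu>. kk j y * u l y powr (\<alpha> - 1) = 0"
      using integral_nonneg_eq_0_iff_AE[OF kpow_int[OF assms] nn] unfolding Aj_def by simp
    hence "AE y in \<nu>. kk j y = 0"
      using AE_space by eventually_elim (use u_pos[OF assms] in \<open>fastforce\<close>)
    hence "(\<integral>y. kk j y \<partial>\<nu>) = (\<integral>y. 0 \<partial>\<nu>)" by (rule integral_cong_AE[rotated 2]) auto
    thus False using kk_integral by simp
  qed
  ultimately show ?thesis by simp
qed

end

context pd begin

lemma mk_int: "integrable \<nu> (mk l)"
  unfolding mk_def[abs_def] by (intro Bochner_Integration.integrable_sum Bochner_Integration.integrable_mult_right kk_int)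

lemma mk_integral: "l \<in> simplexJ \<Longrightarrow> (\<integral>y. mk l y \<partial>\<nu>) = 1"
  unfolding mk_def using kk_int kk_integral by (simp add: integral_sum simplex_sum)

definition rho :: "real \<Rightarrow> real" where "rho \<eta> = \<eta> / (1 - \<alpha>)"
definition Zf :: "real \<Rightarrow> real ^ 'j \<Rightarrow> real" where
  "Zf \<eta> l = (\<Sum>m\<in>UNIV. l $ m * (Aj l m + cc) powr rho \<eta>)"

lemma falpha'_eq: "falpha' \<alpha> x = (x powr (\<alpha> - 1) - 1) / (\<alpha> - 1)"
  using alt by (simp add: falpha'_def)

lemma bint:
  assumes "l \<in> simplexJ"
  shows "integrable \<nu> (\<lambda>y. kk j y * falpha' \<alpha> (u l y))"
    and "(\<integral>y. kk j y * falpha' \<alpha> (u l y) \<partial>\<nu>) = (Aj l j - 1) / (\<alpha> - 1)"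
proof -
  have eq: "(\<lambda>y. kk j y * falpha' \<alpha> (u l y)) = (\<lambda>y. (kk j y * u l y powr (\<alpha> - 1) - kk j y) / (\<alpha> - 1))"
    by (simp add: falpha'_eq fun_eq_iff field_simps)
  show "integrable \<nu> (\<lambda>y. kk j y * falpha' \<alpha> (u l y))"
    unfolding eq by (intro Bochner_Integration.integrable_divide Bochner_Integration.integrable_diff kpow_int[OF assms] kk_int)
  show "(\<integral>y. kk j y * falpha' \<alpha> (u l y) \<partial>\<nu>) = (Aj l j - 1) / (\<alpha> - 1)"
    unfolding eq using kpow_int[OF assms] kk_int by (simp add: Aj_def kk_integral)
qed

lemma bfun_eq:
  assumes "l \<in> simplexJ"
  shows "bfun \<nu> k p \<alpha> (mixk k \<Theta> l) (\<Theta> j) = (Aj l j - 1) / (\<alpha> - 1)"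
  unfolding bfun_def mk_eq using bint(2)[OF assms, of j] by (simp add: u_def kk_def)

lemma bfun_int:
  assumes "l \<in> simplexJ"
  shows "integrable \<nu> (\<lambda>y. k (\<Theta> j) y * falpha' \<alpha> (mixk k \<Theta> l y / p y))"
  using bint(1)[OF assms, of j] by (simp add: mk_eq u_def kk_def)

lemma bfun_pos:
  assumes "l \<in> simplexJ"
  shows "(\<alpha> - 1) * (bfun \<nu> k p \<alpha> (mixk k \<Theta> l) (\<Theta> j) + \<kappa>) + 1 = Aj l j + cc"
  unfolding bfun_eq[OF assms] cc_def using alt by (simp add: field_simps)

lemma Gamma_eq:
  assumes "l \<in> simplexJ"
  shows "Gamma_a \<alpha> \<eta> (bfun \<nu> k p \<alpha> (mixk k \<Theta> l) (\<Theta> j) + \<kappa>) = (Aj l j + cc) powr rho \<eta>"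
  unfolding Gamma_a_def bfun_pos[OF assms] rho_def ..

lemma AB_pos: "l \<in> simplexJ \<Longrightarrow> 0 < Aj l j + cc"
  using Aj_pos cc_nonneg by (simp add: add_pos_nonneg)

lemma Zf_pos:
  assumes "l \<in> simplexJ"
  shows "0 < Zf \<eta> l"
  unfolding Zf_def
  by (rule wsum_pos[where S=UNIV and w="\<lambda>m. l $ m", simplified])
     (use assms AB_pos simplex_nonneg simplex_sum in \<open>auto simp: less_imp_neq[symmetric]\<close>)

lemma Imixt_eq:
  assumes "l \<in> simplexJ"
  shows "Imixt \<nu> k p \<alpha> \<eta> \<kappa> \<Theta> l = (\<chi> j. l $ j * (Aj l j + cc) powr rho \<eta> / Zf \<eta> l)"
  unfolding Imixt_def Gamma_eq[OF assms] Zf_def ..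

lemma Imixt_simplex:
  assumes "l \<in> simplexJ"
  shows "Imixt \<nu> k p \<alpha> \<eta> \<kappa> \<Theta> l \<in> simplexJ"
proof -
  have Z: "0 < Zf \<eta> l" by (rule Zf_pos[OF assms])
  have "(\<Sum>j\<in>UNIV. l $ j * (Aj l j + cc) powr rho \<eta> / Zf \<eta> l) = 1"
    using Z by (simp add: sum_divide_distrib[symmetric] Zf_def)
  moreover have "\<forall>j. 0 \<le> l $ j * (Aj l j + cc) powr rho \<eta> / Zf \<eta> l"
    using Z simplex_nonneg[OF assms] by (auto intro!: divide_nonneg_pos mult_nonneg_nonneg)
  ultimately show ?thesis unfolding Imixt_eq[OF assms] simplexJ_def by simp
qed

lemma Imixt_pos:
  assumes "l \<in> simplexJ" "0 < l $ j"
  shows "0 < Imixt \<nu> k p \<alpha> \<eta> \<kappa> \<Theta> l $ j"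
  unfolding Imixt_eq[OF assms(1)] using assms Zf_pos[OF assms(1)] AB_pos[OF assms(1)]
  by (simp add: divide_pos_pos less_imp_neq[symmetric])

end

lemma falpha_nonneg:
  assumes "x > 0" "\<alpha> \<noteq> 1"
  shows "0 \<le> falpha \<alpha> x"
  using assms bern_nonneg[of x \<alpha>] ln_le_minus_one[of x] by (auto simp: falpha_def)

lemma falpha_pos:
  assumes "x > 0" "x \<noteq> 1" "\<alpha> \<noteq> 1"
  shows "0 < falpha \<alpha> x"
  using assms bern_strict[of x \<alpha>] ln_strict[of x] by (auto simp: falpha_def)

context pd begin

definition fp :: "real ^ 'j \<Rightarrow> 'y \<Rightarrow> real" where "fp l y = falpha \<alpha> (u l y) * p y"
definition Psr :: "real ^ 'j \<Rightarrow> real" where "Psr l = (\<integral>y. fp l y \<partial>\<nu>)"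
definition L :: "'y \<Rightarrow> real" where "L y = (MAX j. \<bar>ln (kk j y / p y)\<bar>)"

lemma fp_meas[measurable]: "fp l \<in> borel_measurable \<nu>"
  unfolding fp_def[abs_def] falpha_def by measurable

lemma fp_nonneg: "l \<in> simplexJ \<Longrightarrow> y \<in> space \<nu> \<Longrightarrow> 0 \<le> fp l y"
  unfolding fp_def using u_pos ppos alt by (intro mult_nonneg_nonneg falpha_nonneg) (auto intro: less_imp_le)

lemma mkpow_int: "l \<in> simplexJ \<Longrightarrow> integrable \<nu> (\<lambda>y. mk l y * u l y powr (\<alpha> - 1))"
proof -
  assume l: "l \<in> simplexJ"
  have "integrable \<nu> (\<lambda>y. \<Sum>j\<in>UNIV. l $ j * (kk j y * u l y powr (\<alpha> - 1)))"
    by (intro Bochner_Integration.integrable_sum Bochner_Integration.integrable_mult_right kpow_int[OF l])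
  thus ?thesis by (simp add: mk_def sum_distrib_right mult.assoc)
qed

lemma upow_alpha: "l \<in> simplexJ \<Longrightarrow> y \<in> space \<nu> \<Longrightarrow> u l y powr \<alpha> * p y = mk l y * u l y powr (\<alpha> - 1)"
proof -
  assume a: "l \<in> simplexJ" "y \<in> space \<nu>"
  have "u l y powr \<alpha> = u l y * u l y powr (\<alpha> - 1)"
    using u_pos[OF a] by (simp add: powr_diff)
  thus ?thesis using ppos[OF a(2)] by (simp add: u_def)
qed

lemma fp_eq_ne0:
  assumes "\<alpha> \<noteq> 0" "l \<in> simplexJ" "y \<in> space \<nu>"
  shows "fp l y = (mk l y * u l y powr (\<alpha> - 1) - p y - \<alpha> * (mk l y - p y)) / (\<alpha> * (\<alpha> - 1))"
proof -
  have "fp l y = (u l y powr \<alpha> * p y - p y - \<alpha> * (u l y * p y - p y)) / (\<alpha> * (\<alpha> - 1))"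
    unfolding fp_def falpha_def using assms alt by (simp add: field_simps)
  also have "u l y * p y = mk l y" using ppos[OF assms(3)] by (simp add: u_def)
  finally show ?thesis using upow_alpha[OF assms(2,3)] by simp
qed

lemma L_meas[measurable]: "L \<in> borel_measurable \<nu>" unfolding L_def[abs_def] by measurable

lemma L_ge: "\<bar>ln (kk j y / p y)\<bar> \<le> L y" unfolding L_def by (rule Max_ge) auto

lemma Jc_ge1: "1 \<le> Jc" unfolding Jc_def by (simp add: Suc_leI)

lemma ln_u_bound:
  assumes "l \<in> simplexJ" "y \<in> space \<nu>"
  shows "\<bar>ln (u l y)\<bar> \<le> L y + ln Jc"
proof -
  have u0: "0 < u l y" by (rule u_pos[OF assms])
  have p0: "0 < p y" by (rule ppos[OF assms(2)])
  have "(MAX j. kk j y) \<in> range (\<lambda>j. kk j y)" by (rule Max_in) auto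
  then obtain j1 where j1: "(MAX j. kk j y) = kk j1 y" by (metis rangeE)
  have "u l y \<le> kk j1 y / p y" unfolding u_def using mk_le[OF assms] j1 p0 by (simp add: divide_right_mono)
  hence "ln (u l y) \<le> ln (kk j1 y / p y)" using u0 by simp
  also have "\<dots> \<le> L y" using L_ge[of j1 y] by simp
  finally have up: "ln (u l y) \<le> L y" .
  obtain j0 where j0: "(kk j0 y / p y) / Jc \<le> u l y" using u_lower[OF assms] by blast
  have q0: "0 < (kk j0 y / p y) / Jc" using kk_pos[OF assms(2)] p0 Jc_pos by simp
  have "ln ((kk j0 y / p y) / Jc) \<le> ln (u l y)" using j0 q0 by simp
  moreover have "ln ((kk j0 y / p y) / Jc) = ln (kk j0 y / p y) - ln Jc"
    by (rule ln_divide_pos) (use kk_pos[OF assms(2)] p0 Jc_pos in auto)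
  moreover have "- L y \<le> ln (kk j0 y / p y)" using L_ge[of j0 y] by simp
  ultimately have lo: "- L y - ln Jc \<le> ln (u l y)" by simp
  have "0 \<le> ln Jc" using Jc_ge1 by simp
  thus ?thesis using up lo by (simp add: abs_le_iff)
qed

lemma pln_int:
  assumes "\<alpha> = 0" "l \<in> simplexJ"
  shows "integrable \<nu> (\<lambda>y. p y * ln (u l y))"
proof -
  have Lnn: "y \<in> space \<nu> \<Longrightarrow> 0 \<le> L y" for y using L_ge[of undefined y] by (meson abs_ge_zero order_trans)
  have Lp: "integrable \<nu> (\<lambda>y. L y * p y)"
  proof (rule integrableI_nonneg)
    show "AE x in \<nu>. 0 \<le> L x * p x" by (auto intro!: AE_I2 mult_nonneg_nonneg Lnn less_imp_le[OF ppos])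
    show "(\<integral>\<^sup>+ x. ennreal (L x * p x) \<partial>\<nu>) < \<infinity>" using A3log[OF assms(1)] by (simp add: L_def kk_def)
  qed simp
  have f: "integrable \<nu> (\<lambda>y. L y * p y + ln Jc * p y)"
    by (intro Bochner_Integration.integrable_add Lp Bochner_Integration.integrable_mult_right p_int)
  have "AE y in \<nu>. norm (p y * ln (u l y)) \<le> norm (L y * p y + ln Jc * p y)"
  proof (rule AE_I2)
    fix y assume y: "y \<in> space \<nu>"
    have "norm (p y * ln (u l y)) = p y * \<bar>ln (u l y)\<bar>" using ppos[OF y] by (simp add: abs_mult)
    also have "\<dots> \<le> p y * (L y + ln Jc)" using ln_u_bound[OF assms(2) y] ppos[OF y] by (intro mult_left_mono) auto
    also have "\<dots> \<le> norm (L y * p y + ln Jc * p y)" by (simp add: algebra_simps)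
    finally show "norm (p y * ln (u l y)) \<le> norm (L y * p y + ln Jc * p y)" .
  qed
  from Bochner_Integration.integrable_bound[OF f _ this] show ?thesis by simp
qed

lemma fp_int:
  assumes "l \<in> simplexJ"
  shows "integrable \<nu> (fp l)"
proof (cases "\<alpha> = 0")
  case True
  have eq: "AE y in \<nu>. fp l y = mk l y - p y - p y * ln (u l y)"
  proof (rule AE_I2)
    fix y assume y: "y \<in> space \<nu>"
    show "fp l y = mk l y - p y - p y * ln (u l y)"
      unfolding fp_def falpha_def using True ppos[OF y] by (simp add: u_def field_simps)
  qed
  have "integrable \<nu> (\<lambda>y. mk l y - p y - p y * ln (u l y))"
    by (intro Bochner_Integration.integrable_diff mk_int p_int pln_int[OF True assms])
  thus ?thesis using eq by (intro integrable_cong_AE_imp[OF _ fp_meas]) (auto elim: AE_mp)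
next
  case False
  have eq: "AE y in \<nu>. fp l y = (mk l y * u l y powr (\<alpha> - 1) - p y - \<alpha> * (mk l y - p y)) / (\<alpha> * (\<alpha> - 1))"
    by (auto intro!: AE_I2 fp_eq_ne0[OF False assms])
  have "integrable \<nu> (\<lambda>y. (mk l y * u l y powr (\<alpha> - 1) - p y - \<alpha> * (mk l y - p y)) / (\<alpha> * (\<alpha> - 1)))"
    by (intro Bochner_Integration.integrable_divide Bochner_Integration.integrable_diff mkpow_int[OF assms] p_int
        Bochner_Integration.integrable_mult_right mk_int)
  thus ?thesis using eq by (intro integrable_cong_AE_imp[OF _ fp_meas]) (auto elim: AE_mp)
qed

lemma Psi_eq:
  assumes "l \<in> simplexJ"
  shows "Psi \<nu> p \<alpha> (mixk k \<Theta> l) = ennreal (Psr l)"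
proof -
  have "Psi \<nu> p \<alpha> (mixk k \<Theta> l) = (\<integral>\<^sup>+ y. ennreal (fp l y) \<partial>\<nu>)"
    unfolding Psi_def mk_eq fp_def u_def ..
  also have "\<dots> = ennreal (Psr l)" unfolding Psr_def
    by (rule nn_integral_eq_integral[OF fp_int[OF assms]]) (auto intro!: AE_I2 fp_nonneg[OF assms])
  finally show ?thesis .
qed

lemma Psr_nonneg: "l \<in> simplexJ \<Longrightarrow> 0 \<le> Psr l"
  unfolding Psr_def by (intro integral_nonneg_AE) (auto intro!: AE_I2 fp_nonneg)

end

definition hfun :: "real \<Rightarrow> real \<Rightarrow> real" where
  "hfun a x = (if a = 0 then - ln x else x powr a / (a * (a - 1)))"

lemma hfun_jensen:
  fixes w y :: "'i \<Rightarrow> real" and S :: "'i set"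
  assumes S: "finite S" and w: "\<And>j. j \<in> S \<Longrightarrow> 0 \<le> w j" and ws: "(\<Sum>j\<in>S. w j) = 1"
    and y: "\<And>j. j \<in> S \<Longrightarrow> 0 < y j" and a: "a < 1"
  shows "hfun a (\<Sum>j\<in>S. w j * y j) \<le> (\<Sum>j\<in>S. w j * hfun a (y j))"
proof -
  consider "a = 0" | "0 < a" | "a < 0" by linarith
  thus ?thesis
  proof cases
    case 1
    have "(\<Sum>j\<in>S. w j * ln (y j)) \<le> ln (\<Sum>j\<in>S. w j * y j)" by (rule jensen_ln[OF S w ws y])
    thus ?thesis using 1 by (simp add: hfun_def sum_negf)
  next
    case 2
    have d: "a * (a - 1) < 0" using 2 a by (simp add: mult_pos_neg)
    have "(\<Sum>j\<in>S. w j * y j powr a) \<le> (\<Sum>j\<in>S. w j * y j) powr a"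
      by (rule jensen_concave(1)[OF S w ws y 2 a])
    hence "(\<Sum>j\<in>S. w j * y j) powr a / (a * (a - 1)) \<le> (\<Sum>j\<in>S. w j * y j powr a) / (a * (a - 1))"
      using d by (intro divide_right_mono_neg) auto
    thus ?thesis using 2 by (simp add: hfun_def sum_divide_distrib)
  next
    case 3
    have d: "0 < a * (a - 1)" using 3 by (simp add: mult_neg_neg)
    have "(\<Sum>j\<in>S. w j * y j) powr a \<le> (\<Sum>j\<in>S. w j * y j powr a)"
      using jensen_convex(1)[where w=w and y=y and r=a, OF S w ws y] 3 by simp
    hence "(\<Sum>j\<in>S. w j * y j) powr a / (a * (a - 1)) \<le> (\<Sum>j\<in>S. w j * y j powr a) / (a * (a - 1))"
      using d by (simp add: divide_right_mono)
    thus ?thesis using 3 by (simp add: hfun_def sum_divide_distrib)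
  qed
qed

lemma falpha_h:
  assumes "v > 0" "a < 1"
  shows "falpha a v = hfun a v - hfun a 1 + (v - 1) / (1 - a)"
proof (cases "a = 0")
  case True thus ?thesis by (simp add: falpha_def hfun_def)
next
  case False
  have d: "a * (a - 1) \<noteq> 0" using False assms by simp
  have e: "- (a * (v - 1)) / (a * (a - 1)) = (v - 1) / (1 - a)"
    using False assms by (simp add: field_simps)
  have "falpha a v = v powr a / (a * (a - 1)) - 1 / (a * (a - 1)) + - (a * (v - 1)) / (a * (a - 1))"
    using False assms by (simp add: falpha_def diff_divide_distrib add_divide_distrib)
  thus ?thesis unfolding e using False by (simp add: hfun_def)
qed

lemma hfun_scale:
  assumes "v > 0" "x > 0"
  shows "hfun a (v * x) - hfun a v = v powr a * (hfun a x - hfun a 1)"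
  using assms by (auto simp: hfun_def ln_mult powr_mult field_simps)

context pd begin

definition ww :: "real \<Rightarrow> real ^ 'j \<Rightarrow> 'j \<Rightarrow> real" where
  "ww \<eta> l j = (Aj l j + cc) powr rho \<eta> / Zf \<eta> l"
definition Gm :: "real \<Rightarrow> real ^ 'j \<Rightarrow> real" where
  "Gm \<eta> l = (\<Sum>j\<in>UNIV. l $ j * Aj l j * (hfun \<alpha> (ww \<eta> l j) - hfun \<alpha> 1))"

abbreviation IM :: "real \<Rightarrow> real ^ 'j \<Rightarrow> real ^ 'j" where
  "IM \<eta> l \<equiv> Imixt \<nu> k p \<alpha> \<eta> \<kappa> \<Theta> l"

lemma IM_comp: "l \<in> simplexJ \<Longrightarrow> IM \<eta> l $ j = l $ j * ww \<eta> l j"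
  by (simp add: Imixt_eq ww_def)

lemma ww_pos: "l \<in> simplexJ \<Longrightarrow> 0 < ww \<eta> l j"
  unfolding ww_def using AB_pos Zf_pos by (simp add: less_imp_neq[symmetric])

lemma pointwise_step:
  assumes l: "l \<in> simplexJ" and y: "y \<in> space \<nu>"
  shows "fp (IM \<eta> l) y \<le> fp l y + (\<Sum>j\<in>UNIV. (l $ j * (hfun \<alpha> (ww \<eta> l j) - hfun \<alpha> 1)) * (kk j y * u l y powr (\<alpha> - 1)))
            + (mk (IM \<eta> l) y - mk l y) / (1 - \<alpha>)"
proof -
  define l' where "l' = IM \<eta> l"
  have l': "l' \<in> simplexJ" unfolding l'_def by (rule Imixt_simplex[OF l])
  define m where "m = mk l y"
  define m' where "m' = mk l' y"
  define uu where "uu = u l y"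
  have m0: "0 < m" unfolding m_def by (rule mk_pos[OF l y])
  have m'0: "0 < m'" unfolding m'_def by (rule mk_pos[OF l' y])
  have p0: "0 < p y" by (rule ppos[OF y])
  have uu0: "0 < uu" unfolding uu_def by (rule u_pos[OF l y])
  define x where "x = m' / m"
  have x0: "0 < x" unfolding x_def using m0 m'0 by simp
  have u': "u l' y = uu * x" unfolding u_def uu_def x_def using m0 by (simp add: m_def[symmetric] m'_def[symmetric])
  define pi where "pi j = l $ j * kk j y / m" for j
  have pi0: "0 \<le> pi j" for j unfolding pi_def using simplex_nonneg[OF l] kk_pos[OF y] m0
    by (simp add: less_imp_le)
  have pis: "(\<Sum>j\<in>UNIV. pi j) = 1" unfolding pi_def using m0
    by (simp add: sum_divide_distrib[symmetric] m_def mk_def)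
  have pix: "(\<Sum>j\<in>UNIV. pi j * ww \<eta> l j) = x"
  proof -
    have "m' = (\<Sum>j\<in>UNIV. l $ j * ww \<eta> l j * kk j y)" unfolding m'_def mk_def l'_def
      by (simp add: IM_comp[OF l])
    thus ?thesis unfolding x_def pi_def using m0
      by (simp add: sum_divide_distrib[symmetric] algebra_simps)
  qed
  have jen: "hfun \<alpha> x \<le> (\<Sum>j\<in>UNIV. pi j * hfun \<alpha> (ww \<eta> l j))"
    using hfun_jensen[of UNIV pi "ww \<eta> l" \<alpha>] pi0 pis ww_pos[OF l] alt by (simp add: pix)
  have jen2: "hfun \<alpha> x - hfun \<alpha> 1 \<le> (\<Sum>j\<in>UNIV. pi j * (hfun \<alpha> (ww \<eta> l j) - hfun \<alpha> 1))"
    using jen pis by (simp add: right_diff_distrib sum_subtractf sum_distrib_right[symmetric])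
  have coef: "p y * uu powr \<alpha> * pi j = l $ j * (kk j y * uu powr (\<alpha> - 1))" for j
  proof -
    have "uu powr \<alpha> = uu * uu powr (\<alpha> - 1)" using uu0 by (simp add: powr_diff)
    moreover have "p y * uu = m" unfolding uu_def u_def m_def using p0 by simp
    ultimately show ?thesis unfolding pi_def using m0 by (simp add: field_simps)
  qed
  have "fp l' y - fp l y = p y * (hfun \<alpha> (uu * x) - hfun \<alpha> uu) + p y * (uu * x - uu) / (1 - \<alpha>)"
  proof -
    have f1: "falpha \<alpha> (uu * x) = hfun \<alpha> (uu * x) - hfun \<alpha> 1 + (uu * x - 1) / (1 - \<alpha>)"
      using falpha_h[of "uu * x" \<alpha>] uu0 x0 alt by simp
    have f2: "falpha \<alpha> uu = hfun \<alpha> uu - hfun \<alpha> 1 + (uu - 1) / (1 - \<alpha>)"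
      using falpha_h[of uu \<alpha>] uu0 alt by simp
    have f3: "(uu * x - 1) / (1 - \<alpha>) - (uu - 1) / (1 - \<alpha>) = (uu * x - uu) / (1 - \<alpha>)"
      by (simp add: diff_divide_distrib)
    have "fp l' y - fp l y = p y * ((hfun \<alpha> (uu * x) - hfun \<alpha> uu) + ((uu * x - 1) / (1 - \<alpha>) - (uu - 1) / (1 - \<alpha>)))"
      unfolding fp_def u' uu_def[symmetric] f1 f2 by (simp add: algebra_simps)
    thus ?thesis unfolding f3 by (simp add: algebra_simps)
  qed
  also have "p y * (uu * x - uu) = m' - m"
    unfolding x_def using p0 m0 by (simp add: uu_def u_def m_def field_simps)
  also have "hfun \<alpha> (uu * x) - hfun \<alpha> uu = uu powr \<alpha> * (hfun \<alpha> x - hfun \<alpha> 1)"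
    by (rule hfun_scale[OF uu0 x0])
  also have "p y * (uu powr \<alpha> * (hfun \<alpha> x - hfun \<alpha> 1)) \<le> p y * uu powr \<alpha> * (\<Sum>j\<in>UNIV. pi j * (hfun \<alpha> (ww \<eta> l j) - hfun \<alpha> 1))"
    using jen2 p0 by (simp add: mult.assoc mult_left_mono)
  also have "\<dots> = (\<Sum>j\<in>UNIV. (l $ j * (hfun \<alpha> (ww \<eta> l j) - hfun \<alpha> 1)) * (kk j y * uu powr (\<alpha> - 1)))"
    by (simp add: sum_distrib_left mult.assoc[symmetric] coef) (simp add: algebra_simps)
  finally show ?thesis unfolding l'_def m'_def m_def uu_def by simp
qed

end

context pd begin

lemma Psr_step:
  assumes l: "l \<in> simplexJ"
  shows "Psr (IM \<eta> l) \<le> Psr l + Gm \<eta> l"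
proof -
  define c where "c j = l $ j * (hfun \<alpha> (ww \<eta> l j) - hfun \<alpha> 1)" for j
  have l': "IM \<eta> l \<in> simplexJ" by (rule Imixt_simplex[OF l])
  define R where "R y = fp l y + (\<Sum>j\<in>UNIV. c j * (kk j y * u l y powr (\<alpha> - 1))) + (mk (IM \<eta> l) y - mk l y) / (1 - \<alpha>)" for y
  have Rint: "integrable \<nu> R" unfolding R_def
    by (intro Bochner_Integration.integrable_add Bochner_Integration.integrable_sum Bochner_Integration.integrable_divide
        Bochner_Integration.integrable_diff Bochner_Integration.integrable_mult_right fp_int[OF l] kpow_int[OF l] mk_int)
  have "Psr (IM \<eta> l) \<le> (\<integral>y. R y \<partial>\<nu>)" unfolding Psr_def
    by (rule integral_mono_AE[OF fp_int[OF l'] Rint]) (auto intro!: AE_I2 simp: R_def c_def pointwise_step[OF l])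
  also have "(\<integral>y. R y \<partial>\<nu>) = Psr l + (\<Sum>j\<in>UNIV. c j * Aj l j) + (1 - 1) / (1 - \<alpha>)"
  proof -
    have i1: "(\<integral>y. (\<Sum>j\<in>UNIV. c j * (kk j y * u l y powr (\<alpha> - 1))) \<partial>\<nu>) = (\<Sum>j\<in>UNIV. c j * Aj l j)"
      using kpow_int[OF l] by (simp add: integral_sum Aj_def)
    have i2: "(\<integral>y. (mk (IM \<eta> l) y - mk l y) / (1 - \<alpha>) \<partial>\<nu>) = (1 - 1) / (1 - \<alpha>)"
      using mk_int mk_integral[OF l] mk_integral[OF l'] by simp
    show ?thesis unfolding R_def Psr_def
      apply (subst Bochner_Integration.integral_add)
        apply (intro Bochner_Integration.integrable_add Bochner_Integration.integrable_sum fp_int[OF l]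
           Bochner_Integration.integrable_mult_right kpow_int[OF l])
       apply (intro Bochner_Integration.integrable_divide Bochner_Integration.integrable_diff mk_int)
      apply (subst Bochner_Integration.integral_add)
        apply (intro fp_int[OF l])
       apply (intro Bochner_Integration.integrable_sum Bochner_Integration.integrable_mult_right kpow_int[OF l])
      using i1 i2 by simp
  qed
  also have "\<dots> = Psr l + Gm \<eta> l" unfolding Gm_def c_def by (simp add: algebra_simps)
  finally show ?thesis .
qed

lemma Gm_le:
  assumes l: "l \<in> simplexJ" and eta: "0 < \<eta>" "\<eta> \<le> 1"
  shows "Gm \<eta> l \<le> 0"
    and "Gm \<eta> l = 0 \<Longrightarrow> (\<forall>j. 0 < l $ j \<longrightarrow> (Aj l j + cc) powr rho \<eta> = Zf \<eta> l)"
proof -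
  have lnn: "\<And>j. j \<in> UNIV \<Longrightarrow> 0 \<le> l $ j" using simplex_nonneg[OF l] by simp
  have ls: "(\<Sum>j\<in>UNIV. l $ j) = 1" using simplex_sum[OF l] .
  have A: "\<And>j. j \<in> UNIV \<Longrightarrow> 0 < Aj l j" using Aj_pos[OF l] by simp
  have wpos: "\<And>j. 0 < ww \<eta> l j" using ww_pos[OF l] .
  have Zeq: "Zf \<eta> l = (\<Sum>j\<in>UNIV. l $ j * (Aj l j + cc) powr (\<eta> / (1 - \<alpha>)))" unfolding Zf_def rho_def ..
  have "Gm \<eta> l \<le> 0 \<and> (Gm \<eta> l = 0 \<longrightarrow> (\<forall>j. 0 < l $ j \<longrightarrow> (Aj l j + cc) powr rho \<eta> = Zf \<eta> l))"
  proof (cases "\<alpha> = 0")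
    case True
    have r: "rho \<eta> = \<eta>" unfolding rho_def using True by simp
    have G: "Gm \<eta> l = - (\<Sum>j\<in>UNIV. l $ j * Aj l j * ln ((Aj l j + cc) powr \<eta> / Zf \<eta> l))"
      unfolding Gm_def ww_def r by (simp add: hfun_def True sum_negf)
    have Z: "Zf \<eta> l = (\<Sum>j\<in>UNIV. l $ j * (Aj l j + cc) powr \<eta>)" unfolding Zf_def r ..
    note f = fin_zero[where l="\<lambda>j. l $ j" and A="Aj l" and S=UNIV and c=cc and \<eta>=\<eta>, OF _ lnn ls A cc_nonneg eta, folded Z]
    show ?thesis using f r unfolding G by fastforce
  next
    case False
    have G: "Gm \<eta> l = ((\<Sum>j\<in>UNIV. l $ j * Aj l j * ((Aj l j + cc) powr rho \<eta> / Zf \<eta> l) powr \<alpha>) - (\<Sum>j\<in>UNIV. l $ j * Aj l j)) / (\<alpha> * (\<alpha> - 1))"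
      unfolding Gm_def ww_def using False
      by (simp add: hfun_def sum_divide_distrib[symmetric] sum_subtractf[symmetric] diff_divide_distrib[symmetric] algebra_simps)
    show ?thesis
    proof (cases "\<alpha> < 0")
      case True
      have d: "0 < \<alpha> * (\<alpha> - 1)" using True by (simp add: mult_neg_neg)
      note f = fin_neg[where l="\<lambda>j. l $ j" and A="Aj l" and S=UNIV and c=cc and \<eta>=\<eta> and \<alpha>=\<alpha>, OF _ lnn ls A cc_nonneg True eta, folded rho_def Zeq]
      show ?thesis unfolding G using f d by (fastforce simp: divide_le_0_iff)
    next
      case False
      hence a: "0 < \<alpha>" using \<open>\<alpha> \<noteq> 0\<close> by simp
      have d: "\<alpha> * (\<alpha> - 1) < 0" using a alt by (simp add: mult_pos_neg)
      note f = fin_pos[where l="\<lambda>j. l $ j" and A="Aj l" and S=UNIV and c=cc and \<eta>=\<eta> and \<alpha>=\<alpha>, OF _ lnn ls A cc_nonneg a alt eta, folded rho_def Zeq]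
      show ?thesis unfolding G using f d by (fastforce simp: divide_le_0_iff)
    qed
  qed
  thus "Gm \<eta> l \<le> 0" and "Gm \<eta> l = 0 \<Longrightarrow> (\<forall>j. 0 < l $ j \<longrightarrow> (Aj l j + cc) powr rho \<eta> = Zf \<eta> l)" by auto
qed

end

lemma breg_eq:
  assumes u: "u > 0" and v: "v > 0" and a: "a < 1"
  shows "falpha a v - falpha a u - falpha' a u * (v - u) = u powr a * falpha a (v / u)"
proof (cases "a = 0")
  case True
  have e: "ln (v / u) = ln v - ln u" using u v by (simp add: ln_div)
  have e2: "u powr (0 - 1) = 1 / u" using u by (simp add: powr_minus_divide)
  have "falpha a v - falpha a u - falpha' a u * (v - u) = v / u - 1 - (ln v - ln u)"
    unfolding falpha_def falpha'_def using True e2 u by (simp add: field_simps)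
  also have "\<dots> = u powr a * falpha a (v / u)" unfolding falpha_def using True u e by simp
  finally show ?thesis .
next
  case False
  have d: "a * (a - 1) \<noteq> 0" using False a by simp
  define P where "P = u powr a"
  define Q where "Q = v powr a"
  have P0: "P > 0" unfolding P_def using u by simp
  have f1: "falpha a v = (Q - 1 - a * (v - 1)) / (a * (a - 1))" using False a by (simp add: falpha_def Q_def)
  have f2: "falpha a u = (P - 1 - a * (u - 1)) / (a * (a - 1))" using False a by (simp add: falpha_def P_def)
  have f3: "falpha' a u = (P / u - 1) / (a - 1)" using a u by (simp add: falpha'_def P_def powr_diff)
  have f4: "falpha a (v / u) = (Q / P - 1 - a * (v / u - 1)) / (a * (a - 1))"
    using False a by (simp add: falpha_def Q_def P_def powr_divide)
  have a1: "a - 1 \<noteq> 0" using a by simp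
  have u1: "u \<noteq> 0" "P \<noteq> 0" using u P0 by auto
  show ?thesis unfolding f1 f2 f3 f4 P_def[symmetric]
    by (simp add: divide_simps a1 u1 False) (simp add: algebra_simps)
qed

context pd begin

definition Dg :: "real ^ 'j \<Rightarrow> real ^ 'j \<Rightarrow> 'y \<Rightarrow> real" where
  "Dg l l' y = p y * (u l y powr \<alpha> * falpha \<alpha> (u l' y / u l y))"

lemma Dg_nonneg: "l \<in> simplexJ \<Longrightarrow> l' \<in> simplexJ \<Longrightarrow> y \<in> space \<nu> \<Longrightarrow> 0 \<le> Dg l l' y"
  unfolding Dg_def using u_pos ppos alt
  by (intro mult_nonneg_nonneg falpha_nonneg) (auto intro: less_imp_le)

lemma Dg_eq:
  assumes l: "l \<in> simplexJ" and l': "l' \<in> simplexJ" and y: "y \<in> space \<nu>"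
  shows "Dg l l' y = fp l' y - fp l y - (\<Sum>j\<in>UNIV. (l' $ j - l $ j) * (kk j y * falpha' \<alpha> (u l y)))"
proof -
  have s1: "(\<Sum>j\<in>UNIV. (l' $ j - l $ j) * (kk j y * falpha' \<alpha> (u l y))) = (mk l' y - mk l y) * falpha' \<alpha> (u l y)"
    unfolding mk_def by (simp add: sum_subtractf left_diff_distrib sum_distrib_right mult.assoc)
  have s2: "mk l' y - mk l y = p y * (u l' y - u l y)" unfolding u_def using ppos[OF y] by (simp add: field_simps)
  have "(\<Sum>j\<in>UNIV. (l' $ j - l $ j) * (kk j y * falpha' \<alpha> (u l y))) = p y * (falpha' \<alpha> (u l y) * (u l' y - u l y))"
    unfolding s1 s2 by simp
  moreover have "Dg l l' y = p y * (falpha \<alpha> (u l' y) - falpha \<alpha> (u l y) - falpha' \<alpha> (u l y) * (u l' y - u l y))"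
    unfolding Dg_def using breg_eq[OF u_pos[OF l y] u_pos[OF l' y] alt] by simp
  ultimately show ?thesis unfolding fp_def by (simp add: algebra_simps)
qed

lemma grad_ineq:
  assumes l: "l \<in> simplexJ" and l': "l' \<in> simplexJ"
  shows "Psr l' - Psr l - (\<Sum>j\<in>UNIV. (l' $ j - l $ j) * Aj l j) / (\<alpha> - 1) = (\<integral>y. Dg l l' y \<partial>\<nu>)"
    and "integrable \<nu> (Dg l l')"
    and "0 \<le> (\<integral>y. Dg l l' y \<partial>\<nu>)"
proof -
  define G where "G y = fp l' y - fp l y - (\<Sum>j\<in>UNIV. (l' $ j - l $ j) * (kk j y * falpha' \<alpha> (u l y)))" for y
  have Gint: "integrable \<nu> G" unfolding G_def
    by (intro Bochner_Integration.integrable_diff fp_int l l' Bochner_Integration.integrable_sum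
        Bochner_Integration.integrable_mult_right bint(1)[OF l])
  have AEeq: "AE y in \<nu>. G y = Dg l l' y" by (auto intro!: AE_I2 simp: G_def Dg_eq[OF l l'])
  show Dint: "integrable \<nu> (Dg l l')"
    by (rule integrable_cong_AE_imp[OF Gint _ AEeq]) (unfold Dg_def[abs_def] falpha_def, measurable)
  have "(\<integral>y. G y \<partial>\<nu>) = Psr l' - Psr l - (\<Sum>j\<in>UNIV. (l' $ j - l $ j) * ((Aj l j - 1) / (\<alpha> - 1)))"
    unfolding G_def Psr_def
    using fp_int[OF l] fp_int[OF l'] bint[OF l]
    by (simp add: Bochner_Integration.integral_diff integral_sum)
  also have "(\<Sum>j\<in>UNIV. (l' $ j - l $ j) * ((Aj l j - 1) / (\<alpha> - 1))) = (\<Sum>j\<in>UNIV. (l' $ j - l $ j) * Aj l j) / (\<alpha> - 1)"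
  proof -
    have "(\<Sum>j\<in>UNIV. (l' $ j - l $ j) * ((Aj l j - 1) / (\<alpha> - 1))) =
          ((\<Sum>j\<in>UNIV. (l' $ j - l $ j) * Aj l j) - (\<Sum>j\<in>UNIV. l' $ j) + (\<Sum>j\<in>UNIV. l $ j)) / (\<alpha> - 1)"
      by (simp add: sum_divide_distrib[symmetric] sum_subtractf[symmetric] sum.distrib[symmetric] algebra_simps)
    thus ?thesis using simplex_sum[OF l] simplex_sum[OF l'] by simp
  qed
  finally have "(\<integral>y. G y \<partial>\<nu>) = Psr l' - Psr l - (\<Sum>j\<in>UNIV. (l' $ j - l $ j) * Aj l j) / (\<alpha> - 1)" .
  moreover have "(\<integral>y. G y \<partial>\<nu>) = (\<integral>y. Dg l l' y \<partial>\<nu>)"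
    by (rule integral_cong_AE[OF borel_measurable_integrable[OF Gint] borel_measurable_integrable[OF Dint] AEeq])
  ultimately show "Psr l' - Psr l - (\<Sum>j\<in>UNIV. (l' $ j - l $ j) * Aj l j) / (\<alpha> - 1) = (\<integral>y. Dg l l' y \<partial>\<nu>)" by simp
  show "0 \<le> (\<integral>y. Dg l l' y \<partial>\<nu>)" by (intro integral_nonneg_AE) (auto intro!: AE_I2 Dg_nonneg l l')
qed

lemma grad_zero_AE:
  assumes l: "l \<in> simplexJ" and l': "l' \<in> simplexJ" and z: "(\<integral>y. Dg l l' y \<partial>\<nu>) = 0"
  shows "AE y in \<nu>. mk l y = mk l' y"
proof -
  have "AE y in \<nu>. Dg l l' y = 0"
    using integral_nonneg_eq_0_iff_AE[OF grad_ineq(2)[OF l l']] z Dg_nonneg[OF l l'] by (auto intro!: AE_I2)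
  thus ?thesis
  proof (rule AE_mp[OF _ AE_I2], intro impI)
    fix y assume y: "y \<in> space \<nu>" and D: "Dg l l' y = 0"
    have u0: "0 < u l y" "0 < u l' y" using u_pos l l' y by auto
    have "falpha \<alpha> (u l' y / u l y) = 0" using D ppos[OF y] u0 unfolding Dg_def by simp
    hence "u l' y / u l y = 1" using falpha_pos[of "u l' y / u l y" \<alpha>] u0 alt by (cases "u l' y / u l y = 1") auto
    hence "u l' y = u l y" using u0 by simp
    thus "mk l y = mk l' y" using ppos[OF y] unfolding u_def by simp
  qed
qed

lemma Kmeas_eq:
  assumes A: "A \<in> sets \<nu>"
  shows "Kmeas \<nu> k (\<Theta> j) A = (\<integral>y. kk j y * indicator A y \<partial>\<nu>)"
proof -
  have [measurable]: "(\<lambda>y. k (\<Theta> j) y) \<in> borel_measurable \<nu>" using kk_meas[of j] by (simp add: kk_def[abs_def])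
  have "emeasure (density \<nu> (\<lambda>y. ennreal (k (\<Theta> j) y))) A = (\<integral>\<^sup>+ y. ennreal (kk j y) * indicator A y \<partial>\<nu>)"
    by (subst emeasure_density) (auto simp: kk_def[abs_def] A)
  also have "\<dots> = (\<integral>\<^sup>+ y. ennreal (kk j y * indicator A y) \<partial>\<nu>)"
    by (intro nn_integral_cong) (auto simp: indicator_def)
  also have "\<dots> = ennreal (\<integral>y. kk j y * indicator A y \<partial>\<nu>)"
    by (rule nn_integral_eq_integral)
       (auto intro!: AE_I2 mult_nonneg_nonneg less_imp_le[OF kk_pos] integrable_real_mult_indicator A kk_int)
  finally show ?thesis unfolding Kmeas_def measure_def
    by (simp add: integral_nonneg_AE AE_I2 mult_nonneg_nonneg less_imp_le[OF kk_pos])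
qed

lemma lin_indep_eq:
  assumes li: "kernels_lin_indep \<nu> k \<Theta>" and AE: "AE y in \<nu>. mk l y = mk l' y"
  shows "l = l'"
proof -
  have "\<forall>A \<in> sets \<nu>. (\<Sum>j\<in>UNIV. (l $ j - l' $ j) * Kmeas \<nu> k (\<Theta> j) A) = 0"
  proof
    fix A assume A: "A \<in> sets \<nu>"
    have int: "\<And>j. integrable \<nu> (\<lambda>y. kk j y * indicator A y)" by (intro integrable_real_mult_indicator A kk_int)
    have "(\<Sum>j\<in>UNIV. (l $ j - l' $ j) * Kmeas \<nu> k (\<Theta> j) A) =
          (\<integral>y. (\<Sum>j\<in>UNIV. (l $ j - l' $ j) * (kk j y * indicator A y)) \<partial>\<nu>)"
      using int by (simp add: Kmeas_eq[OF A] integral_sum)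
    also have "\<dots> = (\<integral>y. 0 \<partial>\<nu>)"
    proof (rule integral_cong_AE)
      show "AE y in \<nu>. (\<Sum>j\<in>UNIV. (l $ j - l' $ j) * (kk j y * indicator A y)) = 0"
        using AE by eventually_elim
          (simp add: mk_def left_diff_distrib sum_subtractf sum_distrib_right[symmetric] mult.assoc[symmetric])
    qed (use A in auto)
    finally show "(\<Sum>j\<in>UNIV. (l $ j - l' $ j) * Kmeas \<nu> k (\<Theta> j) A) = 0" by simp
  qed
  hence "\<forall>j. l $ j - l' $ j = 0" using li[unfolded kernels_lin_indep_def, rule_format, of "\<lambda>j. l $ j - l' $ j"] by simp
  thus ?thesis by (simp add: vec_eq_iff)
qed

end

lemma simplex_closed_seq:
  fixes x :: "nat \<Rightarrow> real ^ 'j::finite"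
  assumes x: "\<And>n. x n \<in> simplexJ" and lim: "x \<longlonglongrightarrow> l"
  shows "l \<in> simplexJ"
proof -
  have c: "(\<lambda>n. x n $ j) \<longlonglongrightarrow> l $ j" for j using lim by (rule tendsto_vec_nth)
  have "0 \<le> l $ j" for j
    by (rule LIMSEQ_le_const[OF c]) (use x in \<open>auto simp: simplexJ_def\<close>)
  moreover have "(\<Sum>j\<in>UNIV. l $ j) = 1"
  proof -
    have "(\<lambda>n. \<Sum>j\<in>UNIV. x n $ j) \<longlonglongrightarrow> (\<Sum>j\<in>UNIV. l $ j)" by (intro tendsto_sum c)
    moreover have "(\<lambda>n. \<Sum>j\<in>UNIV. x n $ j) = (\<lambda>n. 1)" using x by (simp add: simplexJ_def)
    ultimately show ?thesis using LIMSEQ_unique tendsto_const by metis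
  qed
  ultimately show ?thesis by (simp add: simplexJ_def)
qed

lemma simplex_bounded:
  fixes x :: "nat \<Rightarrow> real ^ 'j::finite"
  assumes x: "\<And>n. x n \<in> simplexJ"
  shows "bounded (range x)"
proof -
  have "norm (x n) \<le> 1" for n
  proof -
    have "norm (x n) \<le> (\<Sum>i\<in>UNIV. \<bar>x n $ i\<bar>)" by (rule norm_le_l1_cart)
    also have "\<dots> = (\<Sum>i\<in>UNIV. x n $ i)" using x by (simp add: simplexJ_def)
    also have "\<dots> = 1" using x by (simp add: simplexJ_def)
    finally show ?thesis .
  qed
  thus ?thesis by (auto simp: bounded_iff)
qed

lemma hfun_tendsto:
  assumes "(f \<longlongrightarrow> a) F" "0 < a" "b < 1"
  shows "((\<lambda>x. hfun b (f x)) \<longlongrightarrow> hfun b a) F"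
  unfolding hfun_def using assms by (cases "b = 0") (auto intro!: tendsto_intros)

context pd begin

lemma Aj_tendsto:
  assumes x: "\<And>n. x n \<in> simplexJ" and lim: "x \<longlonglongrightarrow> l" and l: "l \<in> simplexJ"
  shows "(\<lambda>n. Aj (x n) j) \<longlonglongrightarrow> Aj l j"
  unfolding Aj_def
proof (rule integral_dominated_convergence[where w="\<lambda>y. Jc powr (1 - \<alpha>) * H y"])
  show "integrable \<nu> (\<lambda>y. Jc powr (1 - \<alpha>) * H y)" by (intro Bochner_Integration.integrable_mult_right H_int)
  show "AE y in \<nu>. (\<lambda>n. kk j y * u (x n) y powr (\<alpha> - 1)) \<longlonglongrightarrow> kk j y * u l y powr (\<alpha> - 1)"
  proof (rule AE_I2)
    fix y assume y: "y \<in> space \<nu>"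
    have "(\<lambda>n. mk (x n) y) \<longlonglongrightarrow> mk l y" unfolding mk_def
      by (intro tendsto_sum tendsto_mult tendsto_const tendsto_vec_nth lim)
    hence "(\<lambda>n. u (x n) y) \<longlonglongrightarrow> u l y" unfolding u_def by (intro tendsto_divide tendsto_const) (use ppos[OF y] in auto)
    thus "(\<lambda>n. kk j y * u (x n) y powr (\<alpha> - 1)) \<longlonglongrightarrow> kk j y * u l y powr (\<alpha> - 1)"
      using u_pos[OF l y] by (intro tendsto_mult tendsto_const tendsto_powr) auto
  qed
  show "AE y in \<nu>. norm (kk j y * u (x n) y powr (\<alpha> - 1)) \<le> Jc powr (1 - \<alpha>) * H y" for n
    using integrand_bound[OF x] by (auto intro!: AE_I2)
qed auto

lemma Zf_tendsto:
  assumes x: "\<And>n. x n \<in> simplexJ" and lim: "x \<longlonglongrightarrow> l" and l: "l \<in> simplexJ"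
  shows "(\<lambda>n. Zf \<eta> (x n)) \<longlonglongrightarrow> Zf \<eta> l"
  unfolding Zf_def
  using AB_pos[OF l] by (intro tendsto_sum tendsto_mult tendsto_vec_nth lim tendsto_powr tendsto_add
      Aj_tendsto[OF x lim l] tendsto_const) (auto simp: less_imp_neq[symmetric])

lemma ww_tendsto:
  assumes x: "\<And>n. x n \<in> simplexJ" and lim: "x \<longlonglongrightarrow> l" and l: "l \<in> simplexJ"
  shows "(\<lambda>n. ww \<eta> (x n) j) \<longlonglongrightarrow> ww \<eta> l j"
  unfolding ww_def
  using AB_pos[OF l] Zf_pos[OF l] by (intro tendsto_divide Zf_tendsto[OF x lim l] tendsto_powr tendsto_add
      Aj_tendsto[OF x lim l] tendsto_const) (auto simp: less_imp_neq[symmetric])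

lemma IM_tendsto:
  assumes x: "\<And>n. x n \<in> simplexJ" and lim: "x \<longlonglongrightarrow> l" and l: "l \<in> simplexJ"
  shows "(\<lambda>n. IM \<eta> (x n)) \<longlonglongrightarrow> IM \<eta> l"
proof (rule vec_tendstoI)
  fix j
  show "(\<lambda>n. IM \<eta> (x n) $ j) \<longlonglongrightarrow> IM \<eta> l $ j"
    unfolding IM_comp[OF x] IM_comp[OF l]
    by (intro tendsto_mult tendsto_vec_nth lim ww_tendsto[OF x lim l])
qed

lemma Gm_tendsto:
  assumes x: "\<And>n. x n \<in> simplexJ" and lim: "x \<longlonglongrightarrow> l" and l: "l \<in> simplexJ"
  shows "(\<lambda>n. Gm \<eta> (x n)) \<longlonglongrightarrow> Gm \<eta> l"
  unfolding Gm_def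
  by (intro tendsto_sum tendsto_mult tendsto_vec_nth lim Aj_tendsto[OF x lim l] tendsto_diff tendsto_const
      hfun_tendsto ww_tendsto[OF x lim l] ww_pos[OF l] alt)

end

lemma not_ev_infinite:
  assumes "\<not> eventually P sequentially"
  shows "infinite {n. \<not> P n}"
proof
  assume "finite {n. \<not> P n}"
  then obtain M where M: "{n. \<not> P n} \<subseteq> {..<M}" using finite_nat_bounded by blast
  have "\<forall>n\<ge>M. P n"
  proof (intro allI impI)
    fix n assume "M \<le> n"
    hence "n \<notin> {..<M}" by simp
    thus "P n" using M by blast
  qed
  hence "eventually P sequentially" unfolding eventually_sequentially by blast
  thus False using assms by simp
qed

lemma subseq_in_set:
  fixes x :: "nat \<Rightarrow> 'a::heine_borel"
  assumes b: "bounded (range x)" and N: "infinite N"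
  shows "\<exists>l r. strict_mono r \<and> (\<forall>n. r n \<in> N) \<and> (x \<circ> r) \<longlonglongrightarrow> l"
proof -
  obtain s :: "nat \<Rightarrow> nat" where s: "strict_mono s" "\<And>n. s n \<in> N" using infinite_enumerate[OF N] by auto
  have "bounded (range (x \<circ> s))" using b by (rule bounded_subset) auto
  then obtain l t where t: "strict_mono t" "((x \<circ> s) \<circ> t) \<longlonglongrightarrow> l"
    using bounded_imp_convergent_subsequence by blast
  show ?thesis
    by (rule exI[of _ l], rule exI[of _ "s \<circ> t"]) (use s t in \<open>auto simp: strict_mono_o o_assoc\<close>)
qed


lemma finite_limits_converge:
  fixes x :: "nat \<Rightarrow> 'a::heine_borel"
  assumes b: "bounded (range x)" and F: "finite F"
    and lp: "\<And>l r. strict_mono r \<Longrightarrow> (x \<circ> r) \<longlonglongrightarrow> l \<Longrightarrow> l \<in> F"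
    and st: "(\<lambda>n. dist (x (Suc n)) (x n)) \<longlonglongrightarrow> 0"
  shows "\<exists>a. x \<longlonglongrightarrow> a"
proof -
  obtain \<delta> where d0: "0 < \<delta>" and dF: "\<And>a b. a \<in> F \<Longrightarrow> b \<in> F \<Longrightarrow> a \<noteq> b \<Longrightarrow> 3 * \<delta> \<le> dist a b"
  proof -
    define D where "D = (\<lambda>(a, b). dist a b) ` (F \<times> F - {(a, b). a = b})"
    have fD: "finite D" unfolding D_def using F by simp
    show ?thesis
    proof (cases "D = {}")
      case True
      show ?thesis
      proof (rule that[of 1])
        fix a b assume "a \<in> F" "b \<in> F" "a \<noteq> b"
        hence "dist a b \<in> D" unfolding D_def by (intro image_eqI[of _ _ "(a, b)"]) auto
        thus "3 * 1 \<le> dist a b" using True by simp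
      qed simp
    next
      case False
      have "Min D \<in> D" by (rule Min_in[OF fD False])
      moreover have "\<forall>d\<in>D. 0 < d" unfolding D_def by auto
      ultimately have pos: "0 < Min D" by blast
      show ?thesis
      proof (rule that[of "Min D / 3"])
        show "0 < Min D / 3" using pos by simp
        fix a b assume "a \<in> F" "b \<in> F" "a \<noteq> b"
        hence "dist a b \<in> D" unfolding D_def by (intro image_eqI[of _ _ "(a, b)"]) auto
        thus "3 * (Min D / 3) \<le> dist a b" using fD by simp
      qed
    qed
  qed
  define U where "U = (\<Union>a\<in>F. ball a \<delta>)"
  have evU: "eventually (\<lambda>n. x n \<in> U) sequentially"
  proof (rule ccontr)
    assume na: "\<not> ?thesis"
    have inf: "infinite {n. x n \<notin> U}" using not_ev_infinite[OF na] by simp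
    obtain l and r :: "nat \<Rightarrow> nat" where r: "strict_mono r" "\<forall>n. r n \<in> {n. x n \<notin> U}" "(x \<circ> r) \<longlonglongrightarrow> l"
      using subseq_in_set[OF b inf] by blast
    have lF: "l \<in> F" using lp r(1,3) .
    have "eventually (\<lambda>n. dist ((x \<circ> r) n) l < \<delta>) sequentially"
      using r(3) d0 by (rule tendstoD)
    then obtain M where "\<forall>n\<ge>M. dist ((x \<circ> r) n) l < \<delta>" unfolding eventually_sequentially by blast
    hence "dist ((x \<circ> r) M) l < \<delta>" by simp
    define n where "n = M"
    have "dist ((x \<circ> r) n) l < \<delta>" unfolding n_def by fact
    hence "x (r n) \<in> ball l \<delta>" by (simp add: dist_commute)
    hence "x (r n) \<in> U" using lF unfolding U_def by auto
    thus False using r(2) by auto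
  qed
  have evS: "eventually (\<lambda>n. dist (x (Suc n)) (x n) < \<delta>) sequentially"
    by (rule order_tendstoD(2)[OF st d0])
  have "eventually (\<lambda>n. x n \<in> U \<and> dist (x (Suc n)) (x n) < \<delta>) sequentially"
    by (rule eventually_conj[OF evU evS])
  then obtain N where N: "\<And>n. N \<le> n \<Longrightarrow> x n \<in> U \<and> dist (x (Suc n)) (x n) < \<delta>"
    unfolding eventually_sequentially by blast
  have "x N \<in> U" using N[of N] by simp
  then obtain a where aF: "a \<in> F" and "x N \<in> ball a \<delta>" unfolding U_def by blast
  hence aN: "dist a (x N) < \<delta>" by simp
  have stay: "dist a (x n) < \<delta>" if "N \<le> n" for n
    using that
  proof (induction n rule: dec_induct)
    case base show ?case using aN .
  next
    case (step n)
    obtain b where bF: "b \<in> F" and bn: "dist b (x (Suc n)) < \<delta>" using N[of "Suc n"] step(1) unfolding U_def by auto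
    have t1: "dist a b \<le> dist a (x n) + dist (x n) b" by (rule dist_triangle)
    have t2: "dist (x n) b \<le> dist (x n) (x (Suc n)) + dist (x (Suc n)) b" by (rule dist_triangle)
    have "dist a b \<le> dist a (x n) + dist (x n) (x (Suc n)) + dist (x (Suc n)) b" using t1 t2 by linarith
    also have "\<dots> < 3 * \<delta>" using step(3) N[OF step(1)] bn by (simp add: dist_commute)
    finally have "a = b" using dF[OF aF bF] by (cases "a = b") auto
    thus ?case using bn by simp
  qed
  have "x \<longlonglongrightarrow> a"
  proof (rule ccontr)
    assume nc: "\<not> x \<longlonglongrightarrow> a"
    have imp: "(\<forall>\<epsilon>>0. eventually (\<lambda>n. dist (x n) a < \<epsilon>) sequentially) \<Longrightarrow> x \<longlonglongrightarrow> a"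
      by (simp add: tendsto_iff)
    obtain \<epsilon> where e0: "0 < \<epsilon>" and ne: "\<not> eventually (\<lambda>n. dist (x n) a < \<epsilon>) sequentially"
      using imp nc by auto
    have inf: "infinite {n. \<not> dist (x n) a < \<epsilon>}" by (rule not_ev_infinite[OF ne])
    obtain l and r :: "nat \<Rightarrow> nat" where r: "strict_mono r" "\<forall>n. r n \<in> {n. \<not> dist (x n) a < \<epsilon>}" "(x \<circ> r) \<longlonglongrightarrow> l"
      using subseq_in_set[OF b inf] by blast
    have lF: "l \<in> F" using lp r(1,3) .
    have dlim: "(\<lambda>n. dist ((x \<circ> r) n) a) \<longlonglongrightarrow> dist l a" by (intro tendsto_dist r(3) tendsto_const)
    have "\<epsilon> \<le> dist l a" by (rule LIMSEQ_le_const[OF dlim]) (use r(2) in \<open>auto simp: not_less\<close>)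
    hence lna: "l \<noteq> a" using e0 by auto
    have "dist l a \<le> \<delta>"
    proof (rule LIMSEQ_le_const2[OF dlim])
      show "\<exists>M. \<forall>n\<ge>M. dist ((x \<circ> r) n) a \<le> \<delta>"
      proof (intro exI allI impI)
        fix n assume "N \<le> n"
        hence "N \<le> r n" using r(1) seq_suble le_trans by blast
        thus "dist ((x \<circ> r) n) a \<le> \<delta>" using stay[of "r n"] by (simp add: dist_commute)
      qed
    qed
    moreover have "3 * \<delta> \<le> dist l a" using dF[OF lF aF lna] .
    ultimately show False using d0 by simp
  qed
  thus ?thesis by blast
qed



context pd begin

definition fixp :: "real \<Rightarrow> real ^ 'j \<Rightarrow> bool" where
  "fixp \<eta> l \<longleftrightarrow> l \<in> simplexJ \<and> IM \<eta> l = l"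

lemma rho_pos: "0 < \<eta> \<Longrightarrow> 0 < rho \<eta>" unfolding rho_def using alt by simp

lemma fixp_char:
  assumes "fixp \<eta> l" "0 < l $ j"
  shows "ww \<eta> l j = 1"
proof -
  have l: "l \<in> simplexJ" using assms(1) by (simp add: fixp_def)
  have "l $ j * ww \<eta> l j = l $ j" using assms(1) IM_comp[OF l, of \<eta> j] by (simp add: fixp_def)
  thus ?thesis using assms(2) by simp
qed

lemma fixp_Aj:
  assumes f: "fixp \<eta> l" and eta: "0 < \<eta>" and j: "0 < l $ j"
  shows "Aj l j = Zf \<eta> l powr (1 / rho \<eta>) - cc"
proof -
  have l: "l \<in> simplexJ" using f by (simp add: fixp_def)
  have "(Aj l j + cc) powr rho \<eta> = Zf \<eta> l"
    using fixp_char[OF f j] Zf_pos[OF l] by (simp add: ww_def)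
  hence "((Aj l j + cc) powr rho \<eta>) powr (1 / rho \<eta>) = Zf \<eta> l powr (1 / rho \<eta>)" by simp
  moreover have "((Aj l j + cc) powr rho \<eta>) powr (1 / rho \<eta>) = Aj l j + cc"
    using AB_pos[OF l, of j] rho_pos[OF eta] by (simp add: powr_powr)
  ultimately show ?thesis by simp
qed

lemma fixp_supp_sum:
  assumes f: "fixp \<eta> l" and eta: "0 < \<eta>" and l': "l' \<in> simplexJ"
    and supp: "\<And>j. 0 < l' $ j \<Longrightarrow> 0 < l $ j"
  shows "(\<Sum>j\<in>UNIV. (l' $ j - l $ j) * Aj l j) = 0"
proof -
  have l: "l \<in> simplexJ" using f by (simp add: fixp_def)
  define \<beta> where "\<beta> = Zf \<eta> l powr (1 / rho \<eta>) - cc"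
  have "(\<Sum>j\<in>UNIV. (l' $ j - l $ j) * Aj l j) = (\<Sum>j\<in>UNIV. (l' $ j - l $ j) * \<beta>)"
  proof (rule sum.cong[OF refl])
    fix j :: 'j
    show "(l' $ j - l $ j) * Aj l j = (l' $ j - l $ j) * \<beta>"
    proof (cases "0 < l $ j")
      case True thus ?thesis using fixp_Aj[OF f eta True] by (simp add: \<beta>_def)
    next
      case False
      hence "l $ j = 0" using simplex_nonneg[OF l, of j] by simp
      moreover have "l' $ j = 0" using supp[of j] False simplex_nonneg[OF l', of j] by force
      ultimately show ?thesis by simp
    qed
  qed
  also have "\<dots> = 0" using simplex_sum[OF l] simplex_sum[OF l']
    by (simp add: sum_distrib_right[symmetric] sum_subtractf)
  finally show ?thesis .
qed

lemma fixp_unique: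
  assumes f: "fixp \<eta> l" and f': "fixp \<eta> l'" and eta: "0 < \<eta>"
    and li: "kernels_lin_indep \<nu> k \<Theta>"
    and supp: "\<And>j. 0 < l $ j \<longleftrightarrow> 0 < l' $ j"
  shows "l = l'"
proof -
  have l: "l \<in> simplexJ" and l': "l' \<in> simplexJ" using f f' by (auto simp: fixp_def)
  have s1: "(\<Sum>j\<in>UNIV. (l' $ j - l $ j) * Aj l j) = 0" by (rule fixp_supp_sum[OF f eta l']) (use supp in auto)
  have s2: "(\<Sum>j\<in>UNIV. (l $ j - l' $ j) * Aj l' j) = 0" by (rule fixp_supp_sum[OF f' eta l]) (use supp in auto)
  have g1: "Psr l' - Psr l = (\<integral>y. Dg l l' y \<partial>\<nu>)" using grad_ineq(1)[OF l l'] s1 by simp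
  have g2: "Psr l - Psr l' = (\<integral>y. Dg l' l y \<partial>\<nu>)" using grad_ineq(1)[OF l' l] s2 by simp
  have "(\<integral>y. Dg l l' y \<partial>\<nu>) = 0" using g1 g2 grad_ineq(3)[OF l l'] grad_ineq(3)[OF l' l] by linarith
  hence "AE y in \<nu>. mk l y = mk l' y" by (rule grad_zero_AE[OF l l'])
  thus ?thesis by (rule lin_indep_eq[OF li])
qed

lemma fixp_finite:
  assumes eta: "0 < \<eta>" and li: "kernels_lin_indep \<nu> k \<Theta>"
  shows "finite {l. fixp \<eta> l}"
proof -
  define sp where "sp l = {j. 0 < l $ j}" for l :: "real ^ 'j"
  have inj: "inj_on sp {l. fixp \<eta> l}"
  proof (rule inj_onI)
    fix l l' assume "l \<in> {l. fixp \<eta> l}" "l' \<in> {l. fixp \<eta> l}" "sp l = sp l'"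
    thus "l = l'" using fixp_unique[OF _ _ eta li, of l l'] unfolding sp_def by (auto simp: set_eq_iff)
  qed
  have "finite (sp ` {l. fixp \<eta> l})" by (rule finite_subset[of _ "Pow UNIV"]) auto
  thus ?thesis using inj by (rule finite_imageD)
qed

end

context pd begin

lemma lam_simplex:
  assumes lam0: "lam 0 \<in> simplexJ" and rec: "\<forall>n. lam (Suc n) = IM \<eta> (lam n)"
  shows "lam n \<in> simplexJ"
  by (induction n) (use lam0 rec Imixt_simplex in auto)

lemma lam_pos:
  assumes lam0: "lam 0 \<in> simplexJ_pos" and rec: "\<forall>n. lam (Suc n) = IM \<eta> (lam n)"
  shows "0 < lam n $ j"
proof -
  have l0: "lam 0 \<in> simplexJ" using lam0 by (auto simp: simplexJ_def simplexJ_pos_def less_imp_le)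
  show ?thesis
  proof (induction n)
    case 0 thus ?case using lam0 by (simp add: simplexJ_pos_def)
  next
    case (Suc n) thus ?case using rec Imixt_pos[OF lam_simplex[OF l0 rec]] by simp
  qed
qed

lemma conv_main:
  fixes lam :: "nat \<Rightarrow> real ^ 'j"
  assumes eta: "0 < \<eta>" "\<eta> \<le> 1" and lam0: "lam 0 \<in> simplexJ_pos"
    and rec: "\<forall>n. lam (Suc n) = IM \<eta> (lam n)" and li: "kernels_lin_indep \<nu> k \<Theta>"
  shows "(\<forall>n. Psr (lam (Suc n)) \<le> Psr (lam n))"
    and "\<exists>ls. fixp \<eta> ls \<and> lam \<longlonglongrightarrow> ls \<and> (\<forall>l' \<in> simplexJ. Psr ls \<le> Psr l')"
proof -
  have l0: "lam 0 \<in> simplexJ" using lam0 by (auto simp: simplexJ_def simplexJ_pos_def less_imp_le)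
  have ls: "\<And>n. lam n \<in> simplexJ" using lam_simplex[OF l0 rec] .
  have lp: "\<And>n j. 0 < lam n $ j" using lam_pos[OF lam0 rec] .
  have step: "Psr (lam (Suc n)) \<le> Psr (lam n) + Gm \<eta> (lam n)" for n
    using Psr_step[OF ls[of n], of \<eta>] rec by simp
  have Gle: "Gm \<eta> (lam n) \<le> 0" for n using Gm_le(1)[OF ls eta] .
  show dec: "\<forall>n. Psr (lam (Suc n)) \<le> Psr (lam n)" using step Gle by (meson add_le_same_cancel1 order_trans)
  have dseq: "decseq (\<lambda>n. Psr (lam n))" by (rule decseq_SucI) (use dec in auto)
  obtain L where L: "(\<lambda>n. Psr (lam n)) \<longlonglongrightarrow> L"
    using decseq_convergent[OF dseq, of 0] Psr_nonneg[OF ls] by blast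
  have G0: "(\<lambda>n. Gm \<eta> (lam n)) \<longlonglongrightarrow> 0"
  proof -
    have d: "(\<lambda>n. Psr (lam (Suc n)) - Psr (lam n)) \<longlonglongrightarrow> L - L"
      by (intro tendsto_diff L) (rule LIMSEQ_Suc[OF L])
    show ?thesis
    proof (rule tendsto_sandwich[of "\<lambda>n. Psr (lam (Suc n)) - Psr (lam n)" _ _ "\<lambda>n. 0"])
      show "\<forall>\<^sub>F n in sequentially. Psr (lam (Suc n)) - Psr (lam n) \<le> Gm \<eta> (lam n)"
        using step by (auto intro!: always_eventually simp: algebra_simps)
      show "\<forall>\<^sub>F n in sequentially. Gm \<eta> (lam n) \<le> 0" using Gle by (auto intro!: always_eventually)
    qed (use d in auto)
  qed
  have limfix: "fixp \<eta> l" if r: "strict_mono r" and lim: "(lam \<circ> r) \<longlonglongrightarrow> l" for r l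
  proof -
    have lr: "\<And>n. (lam \<circ> r) n \<in> simplexJ" using ls by simp
    have l: "l \<in> simplexJ" by (rule simplex_closed_seq[OF lr lim])
    have "(\<lambda>n. Gm \<eta> ((lam \<circ> r) n)) \<longlonglongrightarrow> Gm \<eta> l" by (rule Gm_tendsto[OF lr lim l])
    moreover have "(\<lambda>n. Gm \<eta> ((lam \<circ> r) n)) \<longlonglongrightarrow> 0"
      using LIMSEQ_subseq_LIMSEQ[OF G0 r] by (simp add: o_def)
    ultimately have "Gm \<eta> l = 0" using LIMSEQ_unique by blast
    hence eq: "\<forall>j. 0 < l $ j \<longrightarrow> (Aj l j + cc) powr rho \<eta> = Zf \<eta> l" using Gm_le(2)[OF l eta] by blast
    have "IM \<eta> l = l"
    proof (rule vec_eq_iff[THEN iffD2], intro allI)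
      fix j
      show "IM \<eta> l $ j = l $ j"
      proof (cases "0 < l $ j")
        case True thus ?thesis using eq Zf_pos[OF l, of \<eta>] by (simp add: IM_comp[OF l] ww_def)
      next
        case False hence "l $ j = 0" using simplex_nonneg[OF l, of j] by simp
        thus ?thesis by (simp add: IM_comp[OF l])
      qed
    qed
    thus ?thesis using l by (simp add: fixp_def)
  qed
  have bnd: "bounded (range lam)" by (rule simplex_bounded[OF ls])
  have inc: "(\<lambda>n. dist (lam (Suc n)) (lam n)) \<longlonglongrightarrow> 0"
  proof (rule ccontr)
    assume nc: "\<not> ?thesis"
    have imp: "(\<forall>\<epsilon>>0. eventually (\<lambda>n. dist (dist (lam (Suc n)) (lam n)) 0 < \<epsilon>) sequentially) \<Longrightarrow> ?thesis"
      by (simp add: tendsto_iff)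
    obtain \<epsilon> where e0: "0 < \<epsilon>" and ne: "\<not> eventually (\<lambda>n. dist (dist (lam (Suc n)) (lam n)) 0 < \<epsilon>) sequentially"
      using imp nc by auto
    have inf: "infinite {n. \<not> dist (dist (lam (Suc n)) (lam n)) 0 < \<epsilon>}" by (rule not_ev_infinite[OF ne])
    obtain l and r :: "nat \<Rightarrow> nat" where r: "strict_mono r" "\<forall>n. r n \<in> {n. \<not> dist (dist (lam (Suc n)) (lam n)) 0 < \<epsilon>}"
        "(lam \<circ> r) \<longlonglongrightarrow> l"
      using subseq_in_set[OF bnd inf] by blast
    have f: "fixp \<eta> l" by (rule limfix[OF r(1) r(3)])
    have lr: "\<And>n. (lam \<circ> r) n \<in> simplexJ" using ls by simp
    have l: "l \<in> simplexJ" using f by (simp add: fixp_def)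
    have "(\<lambda>n. IM \<eta> ((lam \<circ> r) n)) \<longlonglongrightarrow> IM \<eta> l" by (rule IM_tendsto[OF lr r(3) l])
    hence s: "(\<lambda>n. lam (Suc (r n))) \<longlonglongrightarrow> l" using f rec by (simp add: fixp_def)
    have "(\<lambda>n. dist (lam (Suc (r n))) (lam (r n))) \<longlonglongrightarrow> dist l l"
      using s r(3) by (intro tendsto_dist) (auto simp: o_def)
    hence "eventually (\<lambda>n. dist (dist (lam (Suc (r n))) (lam (r n))) 0 < \<epsilon>) sequentially"
      using e0 by (auto dest: tendstoD)
    then obtain M where "\<forall>n\<ge>M. dist (dist (lam (Suc (r n))) (lam (r n))) 0 < \<epsilon>"
      unfolding eventually_sequentially by blast
    hence "dist (dist (lam (Suc (r M))) (lam (r M))) 0 < \<epsilon>" by simp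
    thus False using r(2) by auto
  qed
  obtain ls where lim: "lam \<longlonglongrightarrow> ls"
    using finite_limits_converge[OF bnd fixp_finite[OF eta(1) li] _ inc] limfix by blast
  have f: "fixp \<eta> ls" using limfix[of id ls] lim by (simp add: strict_mono_def)
  have l: "ls \<in> simplexJ" using f by (simp add: fixp_def)
  \<comment> \<open>KKT condition via the ratio argument\<close>
  have kkt: "(Aj ls j + cc) powr rho \<eta> \<le> Zf \<eta> ls" for j
  proof (rule ccontr)
    assume "\<not> ?thesis"
    hence gt: "1 < ww \<eta> ls j" using Zf_pos[OF l, of \<eta>] by (simp add: ww_def)
    have lj0: "ls $ j = 0"
    proof (rule ccontr)
      assume "ls $ j \<noteq> 0"
      hence "0 < ls $ j" using simplex_nonneg[OF l, of j] by simp
      thus False using fixp_char[OF f] gt by simp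
    qed
    have "(\<lambda>n. ww \<eta> (lam n) j) \<longlonglongrightarrow> ww \<eta> ls j" by (rule ww_tendsto[OF ls lim l])
    hence "eventually (\<lambda>n. 1 < ww \<eta> (lam n) j) sequentially" using gt by (rule order_tendstoD)
    then obtain N where N: "\<And>n. N \<le> n \<Longrightarrow> 1 < ww \<eta> (lam n) j" unfolding eventually_sequentially by blast
    have grow: "lam N $ j \<le> lam n $ j" if "N \<le> n" for n
      using that
    proof (induction n rule: dec_induct)
      case base show ?case by simp
    next
      case (step n)
      have "lam (Suc n) $ j = lam n $ j * ww \<eta> (lam n) j" using rec IM_comp[OF ls] by simp
      also have "\<dots> \<ge> lam n $ j * 1" using N[OF step(1)] lp[of n j] by (intro mult_left_mono) auto
      finally show ?case using step(3) by simp
    qed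
    have "(\<lambda>n. lam n $ j) \<longlonglongrightarrow> ls $ j" by (rule tendsto_vec_nth[OF lim])
    hence "lam N $ j \<le> ls $ j" by (rule LIMSEQ_le_const) (use grow in blast)
    thus False using lj0 lp[of N j] by simp
  qed
  have opt: "Psr ls \<le> Psr l'" if l': "l' \<in> simplexJ" for l'
  proof -
    define \<beta> where "\<beta> = Zf \<eta> ls powr (1 / rho \<eta>) - cc"
    have Ale: "Aj ls j \<le> \<beta>" for j
    proof -
      have "((Aj ls j + cc) powr rho \<eta>) powr (1 / rho \<eta>) \<le> Zf \<eta> ls powr (1 / rho \<eta>)"
        using kkt[of j] rho_pos[OF eta(1)] by (intro powr_mono2) auto
      moreover have "((Aj ls j + cc) powr rho \<eta>) powr (1 / rho \<eta>) = Aj ls j + cc"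
        using AB_pos[OF l, of j] rho_pos[OF eta(1)] by (simp add: powr_powr)
      ultimately show ?thesis by (simp add: \<beta>_def)
    qed
    have s1: "(\<Sum>j\<in>UNIV. l' $ j * Aj ls j) \<le> \<beta>"
    proof -
      have "(\<Sum>j\<in>UNIV. l' $ j * Aj ls j) \<le> (\<Sum>j\<in>UNIV. l' $ j * \<beta>)"
        using simplex_nonneg[OF l'] Ale by (intro sum_mono mult_left_mono) auto
      thus ?thesis using simplex_sum[OF l'] by (simp add: sum_distrib_right[symmetric])
    qed
    have s2: "(\<Sum>j\<in>UNIV. ls $ j * Aj ls j) = \<beta>"
    proof -
      have "(\<Sum>j\<in>UNIV. ls $ j * Aj ls j) = (\<Sum>j\<in>UNIV. ls $ j * \<beta>)"
      proof (rule sum.cong[OF refl])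
        fix j :: 'j
        show "ls $ j * Aj ls j = ls $ j * \<beta>"
        proof (cases "0 < ls $ j")
          case True thus ?thesis using fixp_Aj[OF f eta(1) True] by (simp add: \<beta>_def)
        next
          case False hence "ls $ j = 0" using simplex_nonneg[OF l, of j] by simp
          thus ?thesis by simp
        qed
      qed
      thus ?thesis using simplex_sum[OF l] by (simp add: sum_distrib_right[symmetric])
    qed
    have "(\<Sum>j\<in>UNIV. (l' $ j - ls $ j) * Aj ls j) \<le> 0"
      using s1 s2 by (simp add: left_diff_distrib sum_subtractf)
    hence "0 \<le> (\<Sum>j\<in>UNIV. (l' $ j - ls $ j) * Aj ls j) / (\<alpha> - 1)"
      using alt by (simp add: divide_nonpos_neg)
    thus ?thesis using grad_ineq(1,3)[OF l l'] by linarith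
  qed
  show "\<exists>ls. fixp \<eta> ls \<and> lam \<longlonglongrightarrow> ls \<and> (\<forall>l' \<in> simplexJ. Psr ls \<le> Psr l')"
    using f lim opt by blast
qed

end

theorem theorem2:
  fixes \<nu> :: "'y measure" and k :: "'a::metric_space \<Rightarrow> 'y \<Rightarrow> real" and p :: "'y \<Rightarrow> real"
    and \<Theta> :: "'j::finite \<Rightarrow> 'a" and \<alpha> \<kappa> :: real
  assumes sf: "sigma_finite_measure \<nu>"
    and k_meas: "(\<lambda>(\<theta>, y). k \<theta> y) \<in> borel_measurable (borel \<Otimes>\<^sub>M \<nu>)"
    and k_nonneg: "\<And>\<theta> y. y \<in> space \<nu> \<Longrightarrow> 0 \<le> k \<theta> y"
    and k_int1: "\<And>\<theta>. (\<integral>\<^sup>+ y. ennreal (k \<theta> y) \<partial>\<nu>) = 1"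
    and p_meas: "p \<in> borel_measurable \<nu>"
    \<comment> \<open>(A1)\<close>
    and A1_k: "\<And>\<theta> y. y \<in> space \<nu> \<Longrightarrow> 0 < k \<theta> y"
    and A1_p: "\<And>y. y \<in> space \<nu> \<Longrightarrow> 0 < p y"
    and A1_pint: "(\<integral>\<^sup>+ y. ennreal (p y) \<partial>\<nu>) < \<infinity>"
    \<comment> \<open>(A3)\<close>
    and A3_cont: "\<And>y. y \<in> space \<nu> \<Longrightarrow> continuous_on UNIV (\<lambda>\<theta>. k \<theta> y)"
    and A3_int: "(\<integral>\<^sup>+ y. ennreal ((MAX j. k (\<Theta> j) y) *
                    (MAX j'. (k (\<Theta> j') y / p y) powr (\<alpha> - 1))) \<partial>\<nu>) < \<infinity>"
    and A3_log: "\<alpha> = 0 \<Longrightarrow>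
                 (\<integral>\<^sup>+ y. ennreal ((MAX j. \<bar>ln (k (\<Theta> j) y / p y)\<bar>) * p y) \<partial>\<nu>) < \<infinity>"
    and alpha_lt: "\<alpha> < 1"
    and kappa_le: "\<kappa> \<le> 0"
  shows
    "(\<forall>l \<in> simplexJ. Psi \<nu> p \<alpha> (mixk k \<Theta> l) < \<infinity>)
   \<and> (\<forall>\<eta> > 0. \<forall>lam :: nat \<Rightarrow> real ^ 'j.
        lam 0 \<in> simplexJ \<and> (\<forall>n. lam (Suc n) = Imixt \<nu> k p \<alpha> \<eta> \<kappa> \<Theta> (lam n)) \<longrightarrow>
        (\<forall>n. lam n \<in> simplexJ
           \<and> (\<forall>j. integrable \<nu> (\<lambda>y. k (\<Theta> j) y * falpha' \<alpha> (mixk k \<Theta> (lam n) y / p y)))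
           \<and> (\<forall>j. 0 < (\<alpha> - 1) * (bfun \<nu> k p \<alpha> (mixk k \<Theta> (lam n)) (\<Theta> j) + \<kappa>) + 1)
           \<and> 0 < (\<Sum>m\<in>UNIV. lam n $ m *
                    Gamma_a \<alpha> \<eta> (bfun \<nu> k p \<alpha> (mixk k \<Theta> (lam n)) (\<Theta> m) + \<kappa>))))
   \<and> (\<forall>\<eta>. 0 < \<eta> \<and> \<eta> \<le> 1 \<longrightarrow> (\<forall>lam :: nat \<Rightarrow> real ^ 'j.
        lam 0 \<in> simplexJ_pos \<and> (\<forall>n. lam (Suc n) = Imixt \<nu> k p \<alpha> \<eta> \<kappa> \<Theta> (lam n))
        \<and> kernels_lin_indep \<nu> k \<Theta> \<longrightarrow>
          (\<forall>n. Psi \<nu> p \<alpha> (mixk k \<Theta> (lam (Suc n))) \<le> Psi \<nu> p \<alpha> (mixk k \<Theta> (lam n)))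
        \<and> (\<exists>lstar \<in> simplexJ. lam \<longlonglongrightarrow> lstar
             \<and> Imixt \<nu> k p \<alpha> \<eta> \<kappa> \<Theta> lstar = lstar
             \<and> Psi \<nu> p \<alpha> (mixk k \<Theta> lstar) = (INF l' \<in> simplexJ. Psi \<nu> p \<alpha> (mixk k \<Theta> l')))))"
proof -
  interpret pd \<nu> k p \<Theta> \<alpha> \<kappa>
    by unfold_locales (use k_meas A1_k k_int1 p_meas A1_p A1_pint A3_int A3_log alpha_lt kappa_le in auto)
  have c1: "\<forall>l \<in> simplexJ. Psi \<nu> p \<alpha> (mixk k \<Theta> l) < \<infinity>"
    using Psi_eq by simp
  have c2: "\<forall>\<eta> > 0. \<forall>lam :: nat \<Rightarrow> real ^ 'j.
        lam 0 \<in> simplexJ \<and> (\<forall>n. lam (Suc n) = Imixt \<nu> k p \<alpha> \<eta> \<kappa> \<Theta> (lam n)) \<longrightarrow>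
        (\<forall>n. lam n \<in> simplexJ
           \<and> (\<forall>j. integrable \<nu> (\<lambda>y. k (\<Theta> j) y * falpha' \<alpha> (mixk k \<Theta> (lam n) y / p y)))
           \<and> (\<forall>j. 0 < (\<alpha> - 1) * (bfun \<nu> k p \<alpha> (mixk k \<Theta> (lam n)) (\<Theta> j) + \<kappa>) + 1)
           \<and> 0 < (\<Sum>m\<in>UNIV. lam n $ m *
                    Gamma_a \<alpha> \<eta> (bfun \<nu> k p \<alpha> (mixk k \<Theta> (lam n)) (\<Theta> m) + \<kappa>)))"
  proof (intro allI impI)
    fix \<eta> :: real and lam :: "nat \<Rightarrow> real ^ 'j" and n :: nat
    assume "0 < \<eta>" and h: "lam 0 \<in> simplexJ \<and> (\<forall>n. lam (Suc n) = Imixt \<nu> k p \<alpha> \<eta> \<kappa> \<Theta> (lam n))"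
    have ls: "lam n \<in> simplexJ" using lam_simplex[of lam \<eta> n] h by blast
    show "lam n \<in> simplexJ
           \<and> (\<forall>j. integrable \<nu> (\<lambda>y. k (\<Theta> j) y * falpha' \<alpha> (mixk k \<Theta> (lam n) y / p y)))
           \<and> (\<forall>j. 0 < (\<alpha> - 1) * (bfun \<nu> k p \<alpha> (mixk k \<Theta> (lam n)) (\<Theta> j) + \<kappa>) + 1)
           \<and> 0 < (\<Sum>m\<in>UNIV. lam n $ m *
                    Gamma_a \<alpha> \<eta> (bfun \<nu> k p \<alpha> (mixk k \<Theta> (lam n)) (\<Theta> m) + \<kappa>))"
      using ls bfun_int[OF ls] bfun_pos[OF ls] AB_pos[OF ls] Zf_pos[OF ls, of \<eta>]
      by (simp add: Gamma_eq[OF ls] Zf_def)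
  qed
  have c3: "\<forall>\<eta>. 0 < \<eta> \<and> \<eta> \<le> 1 \<longrightarrow> (\<forall>lam :: nat \<Rightarrow> real ^ 'j.
        lam 0 \<in> simplexJ_pos \<and> (\<forall>n. lam (Suc n) = Imixt \<nu> k p \<alpha> \<eta> \<kappa> \<Theta> (lam n))
        \<and> kernels_lin_indep \<nu> k \<Theta> \<longrightarrow>
          (\<forall>n. Psi \<nu> p \<alpha> (mixk k \<Theta> (lam (Suc n))) \<le> Psi \<nu> p \<alpha> (mixk k \<Theta> (lam n)))
        \<and> (\<exists>lstar \<in> simplexJ. lam \<longlonglongrightarrow> lstar
             \<and> Imixt \<nu> k p \<alpha> \<eta> \<kappa> \<Theta> lstar = lstar
             \<and> Psi \<nu> p \<alpha> (mixk k \<Theta> lstar) = (INF l' \<in> simplexJ. Psi \<nu> p \<alpha> (mixk k \<Theta> l'))))"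
  proof (intro allI impI)
    fix \<eta> :: real and lam :: "nat \<Rightarrow> real ^ 'j"
    assume eta: "0 < \<eta> \<and> \<eta> \<le> 1"
      and h: "lam 0 \<in> simplexJ_pos \<and> (\<forall>n. lam (Suc n) = Imixt \<nu> k p \<alpha> \<eta> \<kappa> \<Theta> (lam n)) \<and> kernels_lin_indep \<nu> k \<Theta>"
    have e1: "0 < \<eta>" "\<eta> \<le> 1" using eta by auto
    have l0: "lam 0 \<in> simplexJ_pos" and rec: "\<forall>n. lam (Suc n) = IM \<eta> (lam n)" and li: "kernels_lin_indep \<nu> k \<Theta>"
      using h by auto
    have l0': "lam 0 \<in> simplexJ" using l0 by (auto simp: simplexJ_def simplexJ_pos_def less_imp_le)
    have ls: "\<And>n. lam n \<in> simplexJ" using lam_simplex[OF l0' rec] .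
    note cm = conv_main[OF e1 l0 rec li]
    have mono: "\<forall>n. Psi \<nu> p \<alpha> (mixk k \<Theta> (lam (Suc n))) \<le> Psi \<nu> p \<alpha> (mixk k \<Theta> (lam n))"
      using cm(1) by (simp add: Psi_eq[OF ls] ennreal_leI)
    obtain lst where f: "fixp \<eta> lst" and lim: "lam \<longlonglongrightarrow> lst" and opt: "\<forall>l' \<in> simplexJ. Psr lst \<le> Psr l'"
      using cm(2) by blast
    have l: "lst \<in> simplexJ" and fx: "IM \<eta> lst = lst" using f by (auto simp: fixp_def)
    have "Psi \<nu> p \<alpha> (mixk k \<Theta> lst) = (INF l' \<in> simplexJ. Psi \<nu> p \<alpha> (mixk k \<Theta> l'))"
    proof (rule antisym)
      show "Psi \<nu> p \<alpha> (mixk k \<Theta> lst) \<le> (INF l' \<in> simplexJ. Psi \<nu> p \<alpha> (mixk k \<Theta> l'))"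
      proof (rule INF_greatest)
        fix l' :: "real ^ 'j" assume l': "l' \<in> simplexJ"
        show "Psi \<nu> p \<alpha> (mixk k \<Theta> lst) \<le> Psi \<nu> p \<alpha> (mixk k \<Theta> l')"
          using opt l' by (simp add: Psi_eq[OF l] Psi_eq[OF l'] ennreal_leI)
      qed
      show "(INF l' \<in> simplexJ. Psi \<nu> p \<alpha> (mixk k \<Theta> l')) \<le> Psi \<nu> p \<alpha> (mixk k \<Theta> lst)"
        by (rule INF_lower[OF l])
    qed
    thus "(\<forall>n. Psi \<nu> p \<alpha> (mixk k \<Theta> (lam (Suc n))) \<le> Psi \<nu> p \<alpha> (mixk k \<Theta> (lam n)))
        \<and> (\<exists>lstar \<in> simplexJ. lam \<longlonglongrightarrow> lstar
             \<and> Imixt \<nu> k p \<alpha> \<eta> \<kappa> \<Theta> lstar = lstar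
             \<and> Psi \<nu> p \<alpha> (mixk k \<Theta> lstar) = (INF l' \<in> simplexJ. Psi \<nu> p \<alpha> (mixk k \<Theta> l')))"
      using mono l lim fx by blast
  qed
  show ?thesis using c1 c2 c3 by blast
qed


end
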